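(* Let $\mathcal M=\langle\mathbb R,<,+,\ldots\rangle$ be an o-minimal structure and let $\mathcal H$ be an SHS defined in $\mathcal M$ such that: (a) for every state $s$, if $I(s)$ is finite then $\mu_s$ is equivalent to the uniform discrete distribution on $I(s)$, and if $I(s)$ is infinite then $\mu_s$ is equivalent to the Lebesgue measure on $I(s)$; (b) for every edge $e$ and $\mathbf v\in\mathbb R^n$, $\mathcal R_e(\mathbf v)$ is either finite or has positive Lebesgue measure, and $\eta_e(\mathbf v)$ is respectively equivalent to the discrete (counting) measure on $\mathcal R_e(\mathbf v)$ or to the Lebesgue measure on $\mathcal R_e(\mathbf v)$. Then for every location $\ell$ and every set $D\subseteq\mathbb R^n$ definable in $\mathcal M$, the set $\mathrm{Pre}^{\mathcal T_{\mathcal H}}(\{\ell\}\times D)$ is definable in $\mathcal M$.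
   Context: Stochastic hybrid system (SHS) with $n$ variables: finite set $L$ of locations; finite set $E$ of edges $e=(\ell,a,\ell')$; for each $\ell$ an invariant $\mathrm{Inv}(\ell)\subseteq\mathbb R^n$ and flow $\gamma_\ell:\mathbb R^n\times\mathbb R^+\to\mathbb R^n$; for each edge $e$ a guard $\mathcal G(e)\subseteq\mathbb R^n$ and reset map $\mathbf v\mapsto\mathcal R_e(\mathbf v)\subseteq\mathbb R^n$. States $S_{\mathcal H}=L\times\mathbb R^n$; $s+\tau=(\ell,\gamma_\ell(\mathbf v,\tau))$ for $s=(\ell,\mathbf v)$; $e$ enabled in $(\ell,\mathbf v)$ if $\mathbf v\in\mathcal G(e)$; $I(s,e)=\{\tau\ge0:\gamma_\ell(\mathbf v,\tau')\in\mathrm{Inv}(\ell)\ \forall\tau'\in[0,\tau],\ \gamma_\ell(\mathbf v,\tau)\in\mathcal G(e)\}$, $I(s)=\bigcup_eI(s,e)$ (assumed nonempty). Probabilistic data: delay distributions $\mu_s$ with $\mu_s(I(s))=1$; edge distributions $w_{s'}$ positive exactly on the edges enabled in $s'$; reset distributions $\eta_e(\mathbf v)$ with $\eta_e(\mathbf v)(\mathcal R_e(\mathbf v))=1$. The STS $\mathcal T_{\mathcal H}$ has kernel $\kappa((\ell,\mathbf v),\{\ell'\}\times D)=\int\sum_{e=(\ell,a,\ell')}w_{s+\tau}(e)\,\eta_e(\gamma_\ell(\mathbf v,\tau))(D)\,d\mu_s(\tau)$. $\mathrm{Pre}^{\mathcal T_{\mathcal H}}(X)=\{s\in S_{\mathcal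 H}:\kappa(s,X)>0\}$. Two measures are equivalent on a set $A$ if they assign positive measure to exactly the same measurable subsets of $A$. $\mathcal H$ is defined in $\mathcal M$ if each $\gamma_\ell$, $\mathrm{Inv}(\ell)$, $\mathcal G(e)$ is definable (without parameters) in $\mathcal M$ and each reset relation $\{(\mathbf v,\mathbf v'):\mathbf v'\in\mathcal R_e(\mathbf v)\}$ is definable. A structure $\langle\mathbb R,<,\ldots\rangle$ is o-minimal if every definable subset of $\mathbb R$ is a finite union of points and open intervals. *)

theory Defs
  imports "HOL-Probability.Probability"
begin

text \<open>A first-order structure M = (R, <, +, ...) is represented by the family of its
  parameter-free definable sets: S k is the collection of definable subsets of R^k,
  points of R^k being lists of length k.  Such families are exactly the collections
  closed under boolean operations, cylinders, diagonals and projections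
  (van den Dries), containing the graphs of < and +.\<close>

definition real_structure :: "(nat \<Rightarrow> real list set set) \<Rightarrow> bool" where
  "real_structure S \<longleftrightarrow>
     (\<forall>k. \<forall>A\<in>S k. A \<subseteq> {xs. length xs = k}) \<and>
     (\<forall>k. {} \<in> S k) \<and>
     (\<forall>k. \<forall>A\<in>S k. {xs. length xs = k} - A \<in> S k) \<and>
     (\<forall>k. \<forall>A\<in>S k. \<forall>B\<in>S k. A \<union> B \<in> S k) \<and>
     (\<forall>k. \<forall>A\<in>S k. {xs @ [x] |xs x. xs \<in> A} \<in> S (Suc k)) \<and>
     (\<forall>k. \<forall>A\<in>S k. {x # xs |x xs. xs \<in> A} \<in> S (Suc k)) \<and>
     (\<forall>k i j. i < k \<longrightarrow> j < k \<longrightarrow> {xs. length xs = k \<and> xs ! i = xs ! j} \<in> S k) \<and>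
     (\<forall>k. \<forall>A\<in>S (Suc k). take k ` A \<in> S k) \<and>
     {[x, y] |x y. x < y} \<in> S 2 \<and>
     {[x, y, z] |x y z. x + y = z} \<in> S 3"

definition fin_union_pts_intervals :: "real set \<Rightarrow> bool" where
  "fin_union_pts_intervals X \<longleftrightarrow>
     (\<exists>P J. finite P \<and> finite (J :: (ereal \<times> ereal) set) \<and>
        X = P \<union> (\<Union>(a, b)\<in>J. {x. a < ereal x \<and> ereal x < b}))"

text \<open>O-minimality: every subset of R definable (with parameters) is a finite union
  of points and open intervals.  Sets definable with parameters are the fibres of
  parameter-free definable sets.\<close>
definition o_minimal :: "(nat \<Rightarrow> real list set set) \<Rightarrow> bool" where
  "o_minimal S \<longleftrightarrow> real_structure S \<and>
     (\<forall>m. \<forall>A\<in>S (Suc m). \<forall>p. length p = m \<longrightarrow> fin_union_pts_intervals {x. x # p \<in> A})"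

definition vlist :: "real ^ 'n::enum \<Rightarrow> real list" where
  "vlist v = map (\<lambda>i. v $ i) enum_class.enum"

definition definable :: "(nat \<Rightarrow> real list set set) \<Rightarrow> (real ^ 'n::enum) set \<Rightarrow> bool" where
  "definable S A \<longleftrightarrow> vlist ` A \<in> S CARD('n::enum)"

definition definable_states ::
    "(nat \<Rightarrow> real list set set) \<Rightarrow> ('l \<times> (real ^ 'n::enum)) set \<Rightarrow> bool" where
  "definable_states S X \<longleftrightarrow> (\<forall>l. definable S {v. (l, v) \<in> X})"

definition src :: "'l \<times> 'a \<times> 'l \<Rightarrow> 'l" where "src e = fst e"
definition tgt :: "'l \<times> 'a \<times> 'l \<Rightarrow> 'l" where "tgt e = snd (snd e)"

definition enabled ::
    "('l \<times> 'a \<times> 'l) set \<Rightarrow> (('l \<times> 'a \<times> 'l) \<Rightarrow> 'v set) \<Rightarrow> 'l \<times> 'a \<times> 'l \<Rightarrow> 'l \<times> 'v \<Rightarrow> bool" where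
  "enabled E G e s \<longleftrightarrow> e \<in> E \<and> src e = fst s \<and> snd s \<in> G e"

definition I_edge ::
    "('l \<Rightarrow> 'v set) \<Rightarrow> ('l \<Rightarrow> 'v \<Rightarrow> real \<Rightarrow> 'v) \<Rightarrow> (('l \<times> 'a \<times> 'l) \<Rightarrow> 'v set)
      \<Rightarrow> 'l \<times> 'v \<Rightarrow> 'l \<times> 'a \<times> 'l \<Rightarrow> real set" where
  "I_edge Inv \<gamma> G s e = {\<tau>. 0 \<le> \<tau> \<and> (\<forall>\<tau>'\<in>{0..\<tau>}. \<gamma> (fst s) (snd s) \<tau>' \<in> Inv (fst s))
                              \<and> \<gamma> (fst s) (snd s) \<tau> \<in> G e}"

definition I_state ::
    "('l \<times> 'a \<times> 'l) set \<Rightarrow> ('l \<Rightarrow> 'v set) \<Rightarrow> ('l \<Rightarrow> 'v \<Rightarrow> real \<Rightarrow> 'v) \<Rightarrow> (('l \<times> 'a \<times> 'l) \<Rightarrow> 'v set)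
      \<Rightarrow> 'l \<times> 'v \<Rightarrow> real set" where
  "I_state E Inv \<gamma> G s = (\<Union>e\<in>{e\<in>E. src e = fst s}. I_edge Inv \<gamma> G s e)"

definition kernel_integrand ::
    "('l \<times> 'a \<times> 'l) set \<Rightarrow> ('l \<Rightarrow> 'v \<Rightarrow> real \<Rightarrow> 'v)
      \<Rightarrow> ('l \<times> 'v \<Rightarrow> ('l \<times> 'a \<times> 'l) \<Rightarrow> real) \<Rightarrow> (('l \<times> 'a \<times> 'l) \<Rightarrow> 'v \<Rightarrow> 'v measure)
      \<Rightarrow> 'l \<times> 'v \<Rightarrow> 'l \<Rightarrow> 'v set \<Rightarrow> real \<Rightarrow> ennreal" where
  "kernel_integrand E \<gamma> w \<eta> s l' D \<tau> =
     (\<Sum>e\<in>{e\<in>E. src e = fst s \<and> tgt e = l'}.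
        ennreal (w (fst s, \<gamma> (fst s) (snd s) \<tau>) e) * emeasure (\<eta> e (\<gamma> (fst s) (snd s) \<tau>)) D)"

definition shs_kernel ::
    "('l \<times> 'a \<times> 'l) set \<Rightarrow> ('l \<Rightarrow> 'v \<Rightarrow> real \<Rightarrow> 'v) \<Rightarrow> ('l \<times> 'v \<Rightarrow> real measure)
      \<Rightarrow> ('l \<times> 'v \<Rightarrow> ('l \<times> 'a \<times> 'l) \<Rightarrow> real) \<Rightarrow> (('l \<times> 'a \<times> 'l) \<Rightarrow> 'v \<Rightarrow> 'v measure)
      \<Rightarrow> 'l \<times> 'v \<Rightarrow> 'l \<Rightarrow> 'v set \<Rightarrow> ennreal" where
  "shs_kernel E \<gamma> \<mu> w \<eta> s l' D = (\<integral>\<^sup>+ \<tau>. kernel_integrand E \<gamma> w \<eta> s l' D \<tau> \<partial>\<mu> s)"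

definition Pre ::
    "('l \<times> 'a \<times> 'l) set \<Rightarrow> ('l \<Rightarrow> 'v \<Rightarrow> real \<Rightarrow> 'v) \<Rightarrow> ('l \<times> 'v \<Rightarrow> real measure)
      \<Rightarrow> ('l \<times> 'v \<Rightarrow> ('l \<times> 'a \<times> 'l) \<Rightarrow> real) \<Rightarrow> (('l \<times> 'a \<times> 'l) \<Rightarrow> 'v \<Rightarrow> 'v measure)
      \<Rightarrow> 'l \<Rightarrow> 'v set \<Rightarrow> ('l \<times> 'v) set" where
  "Pre E \<gamma> \<mu> w \<eta> l' D = {s. shs_kernel E \<gamma> \<mu> w \<eta> s l' D > 0}"

text \<open>Well-formedness of an SHS with its probabilistic data.  The last clause is the
  measurability of the integrand, needed for the kernel formula to make sense.\<close>
definition is_shs ::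
    "('l \<times> 'a \<times> 'l) set \<Rightarrow> ('l \<Rightarrow> (real ^ 'n) set) \<Rightarrow> ('l \<Rightarrow> real ^ 'n \<Rightarrow> real \<Rightarrow> real ^ 'n)
     \<Rightarrow> (('l \<times> 'a \<times> 'l) \<Rightarrow> (real ^ 'n) set) \<Rightarrow> (('l \<times> 'a \<times> 'l) \<Rightarrow> real ^ 'n \<Rightarrow> (real ^ 'n) set)
     \<Rightarrow> ('l \<times> (real ^ 'n) \<Rightarrow> real measure) \<Rightarrow> ('l \<times> (real ^ 'n) \<Rightarrow> ('l \<times> 'a \<times> 'l) \<Rightarrow> real)
     \<Rightarrow> (('l \<times> 'a \<times> 'l) \<Rightarrow> real ^ 'n \<Rightarrow> (real ^ 'n) measure) \<Rightarrow> bool" where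
  "is_shs E Inv \<gamma> G R \<mu> w \<eta> \<longleftrightarrow>
     finite E \<and>
     (\<forall>s. I_state E Inv \<gamma> G s \<noteq> {}) \<and>
     (\<forall>s. prob_space (\<mu> s) \<and> sets (\<mu> s) = sets borel \<and> emeasure (\<mu> s) (I_state E Inv \<gamma> G s) = 1) \<and>
     (\<forall>s e. 0 \<le> w s e \<and> (0 < w s e \<longleftrightarrow> enabled E G e s)) \<and>
     (\<forall>s. (\<exists>e. enabled E G e s) \<longrightarrow> (\<Sum>e\<in>E. w s e) = 1) \<and>
     (\<forall>e\<in>E. \<forall>v. prob_space (\<eta> e v) \<and> sets (\<eta> e v) = sets borel \<and> emeasure (\<eta> e v) (R e v) = 1) \<and>
     (\<forall>s l' D. D \<in> sets borel \<longrightarrow> kernel_integrand E \<gamma> w \<eta> s l' D \<in> borel_measurable borel)"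

definition shs_defined_in ::
    "(nat \<Rightarrow> real list set set) \<Rightarrow> ('l \<times> 'a \<times> 'l) set \<Rightarrow> ('l \<Rightarrow> (real ^ ('n::enum)) set)
     \<Rightarrow> ('l \<Rightarrow> real ^ 'n::enum \<Rightarrow> real \<Rightarrow> real ^ 'n::enum) \<Rightarrow> (('l \<times> 'a \<times> 'l) \<Rightarrow> (real ^ 'n::enum) set)
     \<Rightarrow> (('l \<times> 'a \<times> 'l) \<Rightarrow> real ^ 'n::enum \<Rightarrow> (real ^ 'n::enum) set) \<Rightarrow> bool" where
  "shs_defined_in S E Inv \<gamma> G R \<longleftrightarrow>
     (\<forall>l. {vlist v @ [t] @ vlist (\<gamma> l v t) |v t. 0 \<le> t} \<in> S (2 * CARD('n::enum) + 1)) \<and>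
     (\<forall>l. definable S (Inv l)) \<and>
     (\<forall>e\<in>E. definable S (G e)) \<and>
     (\<forall>e\<in>E. {vlist v @ vlist v' |v v'. v' \<in> R e v} \<in> S (2 * CARD('n::enum)))"

definition equiv_on :: "'a measure \<Rightarrow> 'a measure \<Rightarrow> 'a set \<Rightarrow> bool" where
  "equiv_on M N A \<longleftrightarrow>
     (\<forall>B. B \<in> sets M \<longrightarrow> B \<in> sets N \<longrightarrow> B \<subseteq> A \<longrightarrow> (0 < emeasure M B \<longleftrightarrow> 0 < emeasure N B))"

end

theory Submission
  imports Defs
begin

definition dset :: "(nat \<Rightarrow> real list set set) \<Rightarrow> nat \<Rightarrow> (real list \<Rightarrow> bool) \<Rightarrow> bool" where
  "dset S k P \<longleftrightarrow> {xs. length xs = k \<and> P xs} \<in> S k"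

lemma dset_cong:
  assumes "\<And>xs. length xs = k \<Longrightarrow> P xs = Q xs"
  shows "dset S k P = dset S k Q"
proof -
  have "{xs. length xs = k \<and> P xs} = {xs. length xs = k \<and> Q xs}" using assms by auto
  thus ?thesis by (simp add: dset_def)
qed

lemma dset_congI:
  assumes "dset S k P" "\<And>xs. length xs = k \<Longrightarrow> P xs = Q xs"
  shows "dset S k Q"
  using dset_cong[of k P Q S] assms by simp

context
  fixes S assumes rs: "real_structure S"
begin


lemmas rs_sub0 = rs[unfolded real_structure_def, THEN conjunct1]
lemmas rs_empty = rs[unfolded real_structure_def, THEN conjunct2, THEN conjunct1]
lemmas rs_compl = rs[unfolded real_structure_def, THEN conjunct2, THEN conjunct2, THEN conjunct1]
lemmas rs_un = rs[unfolded real_structure_def, THEN conjunct2, THEN conjunct2, THEN conjunct2, THEN conjunct1]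
lemmas rs_app = rs[unfolded real_structure_def, THEN conjunct2, THEN conjunct2, THEN conjunct2, THEN conjunct2, THEN conjunct1]
lemmas rs_cons = rs[unfolded real_structure_def, THEN conjunct2, THEN conjunct2, THEN conjunct2, THEN conjunct2, THEN conjunct2, THEN conjunct1]
lemmas rs_diag = rs[unfolded real_structure_def, THEN conjunct2, THEN conjunct2, THEN conjunct2, THEN conjunct2, THEN conjunct2, THEN conjunct2, THEN conjunct1]
lemmas rs_take = rs[unfolded real_structure_def, THEN conjunct2, THEN conjunct2, THEN conjunct2, THEN conjunct2, THEN conjunct2, THEN conjunct2, THEN conjunct2, THEN conjunct1]
lemmas rs_less = rs[unfolded real_structure_def, THEN conjunct2, THEN conjunct2, THEN conjunct2, THEN conjunct2, THEN conjunct2, THEN conjunct2, THEN conjunct2, THEN conjunct2, THEN conjunct1]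
lemmas rs_plus = rs[unfolded real_structure_def, THEN conjunct2, THEN conjunct2, THEN conjunct2, THEN conjunct2, THEN conjunct2, THEN conjunct2, THEN conjunct2, THEN conjunct2, THEN conjunct2]
lemmas rsD = rs_sub0 rs_empty rs_compl rs_un rs_app rs_cons rs_diag rs_take rs_less rs_plus

lemma rs_sub: "A \<in> S k \<Longrightarrow> A \<subseteq> {xs. length xs = k}"
  using rs_sub0 by blast

lemma dset_set: "A \<in> S k \<Longrightarrow> dset S k (\<lambda>xs. xs \<in> A)"
proof -
  assume a: "A \<in> S k"
  then have "{xs. length xs = k \<and> xs \<in> A} = A" using rs_sub by auto
  thus ?thesis using a by (simp add: dset_def)
qed

lemma dset_set_iff: "dset S k (\<lambda>xs. xs \<in> A) \<Longrightarrow> A \<subseteq> {xs. length xs = k} \<Longrightarrow> A \<in> S k"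
proof -
  assume a: "dset S k (\<lambda>xs. xs \<in> A)" "A \<subseteq> {xs. length xs = k}"
  then have "{xs. length xs = k \<and> xs \<in> A} = A" by auto
  thus ?thesis using a by (simp add: dset_def)
qed

lemma dset_False: "dset S k (\<lambda>_. False)"
  using rs_empty unfolding dset_def by simp

lemma dset_not: "dset S k P \<Longrightarrow> dset S k (\<lambda>xs. \<not> P xs)"
proof -
  assume "dset S k P"
  then have "{xs. length xs = k} - {xs. length xs = k \<and> P xs} \<in> S k"
    unfolding dset_def using rs_compl by blast
  moreover have "{xs. length xs = k} - {xs. length xs = k \<and> P xs} = {xs. length xs = k \<and> \<not> P xs}" by auto
  ultimately show ?thesis by (simp add: dset_def)
qed

lemma dset_True: "dset S k (\<lambda>_. True)"
  using dset_not[OF dset_False] by simp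

lemma dset_disj: "dset S k P \<Longrightarrow> dset S k Q \<Longrightarrow> dset S k (\<lambda>xs. P xs \<or> Q xs)"
proof -
  assume "dset S k P" "dset S k Q"
  then have "{xs. length xs = k \<and> P xs} \<union> {xs. length xs = k \<and> Q xs} \<in> S k"
    unfolding dset_def using rs_un by blast
  moreover have "{xs. length xs = k \<and> P xs} \<union> {xs. length xs = k \<and> Q xs} = {xs. length xs = k \<and> (P xs \<or> Q xs)}" by auto
  ultimately show ?thesis by (simp add: dset_def)
qed

lemma dset_conj: "dset S k P \<Longrightarrow> dset S k Q \<Longrightarrow> dset S k (\<lambda>xs. P xs \<and> Q xs)"
proof -
  assume a: "dset S k P" "dset S k Q"
  have "dset S k (\<lambda>xs. \<not> (\<not> P xs \<or> \<not> Q xs))"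
    by (intro dset_not dset_disj a)
  thus ?thesis by simp
qed

lemma dset_imp: "dset S k P \<Longrightarrow> dset S k Q \<Longrightarrow> dset S k (\<lambda>xs. P xs \<longrightarrow> Q xs)"
proof -
  assume a: "dset S k P" "dset S k Q"
  have "dset S k (\<lambda>xs. \<not> P xs \<or> Q xs)"
    by (intro dset_not dset_disj a)
  thus ?thesis by simp
qed

lemma dset_iff: "dset S k P \<Longrightarrow> dset S k Q \<Longrightarrow> dset S k (\<lambda>xs. P xs \<longleftrightarrow> Q xs)"
proof -
  assume a: "dset S k P" "dset S k Q"
  have "dset S k (\<lambda>xs. (P xs \<longrightarrow> Q xs) \<and> (Q xs \<longrightarrow> P xs))"
    by (intro dset_conj dset_imp a)
  thus ?thesis by (rule dset_congI) auto
qed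

lemma dset_ex1: "dset S (Suc k) P \<Longrightarrow> dset S k (\<lambda>xs. \<exists>x. P (xs @ [x]))"
proof -
  assume "dset S (Suc k) P"
  then have "take k ` {xs. length xs = Suc k \<and> P xs} \<in> S k"
    unfolding dset_def using rs_take by blast
  moreover have "take k ` {xs. length xs = Suc k \<and> P xs} = {xs. length xs = k \<and> (\<exists>x. P (xs @ [x]))}"
  proof (rule set_eqI, rule iffI)
    fix ys assume "ys \<in> take k ` {xs. length xs = Suc k \<and> P xs}"
    then obtain xs where xs: "length xs = Suc k" "P xs" "ys = take k xs" by auto
    then have "xs = ys @ [last xs]"
      by (metis append_butlast_last_id butlast_conv_take diff_Suc_1 list.size(3) nat.distinct(1))
    then show "ys \<in> {xs. length xs = k \<and> (\<exists>x. P (xs @ [x]))}" using xs by (auto intro!: exI[of _ "last xs"])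
  next
    fix ys assume "ys \<in> {xs. length xs = k \<and> (\<exists>x. P (xs @ [x]))}"
    then obtain x where "length ys = k" "P (ys @ [x])" by auto
    then show "ys \<in> take k ` {xs. length xs = Suc k \<and> P xs}"
      by (intro image_eqI[of _ _ "ys @ [x]"]) auto
  qed
  ultimately show ?thesis by (simp add: dset_def)
qed

lemma dset_all1: "dset S (Suc k) P \<Longrightarrow> dset S k (\<lambda>xs. \<forall>x. P (xs @ [x]))"
proof -
  assume "dset S (Suc k) P"
  then have "dset S k (\<lambda>xs. \<not> (\<exists>x. \<not> P (xs @ [x])))"
    by (intro dset_not dset_ex1[of k "\<lambda>xs. \<not> P xs"] dset_not)
  thus ?thesis by simp
qed

lemma dset_exn: "dset S (k + j) P \<Longrightarrow> dset S k (\<lambda>xs. \<exists>ys. length ys = j \<and> P (xs @ ys))"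
proof (induction j arbitrary: P)
  case 0
  then have "dset S k P" by simp
  then show ?case by (rule dset_congI) auto
next
  case (Suc j)
  have "dset S (Suc (k + j)) P" using Suc.prems by simp
  then have "dset S (k + j) (\<lambda>xs. \<exists>x. P (xs @ [x]))" by (rule dset_ex1)
  then have "dset S k (\<lambda>xs. \<exists>ys. length ys = j \<and> (\<exists>x. P ((xs @ ys) @ [x])))" by (rule Suc.IH)
  then show ?case
  proof (rule dset_congI)
    fix xs :: "real list"
    show "(\<exists>ys. length ys = j \<and> (\<exists>x. P ((xs @ ys) @ [x]))) = (\<exists>ys. length ys = Suc j \<and> P (xs @ ys))"
    proof
      assume "\<exists>ys. length ys = j \<and> (\<exists>x. P ((xs @ ys) @ [x]))"
      then obtain ys x where "length ys = j" "P ((xs @ ys) @ [x])" by auto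
      then show "\<exists>ys. length ys = Suc j \<and> P (xs @ ys)" by (intro exI[of _ "ys @ [x]"]) auto
    next
      assume "\<exists>ys. length ys = Suc j \<and> P (xs @ ys)"
      then obtain ys where ys: "length ys = Suc j" "P (xs @ ys)" by auto
      then have "ys = butlast ys @ [last ys]"
        by (metis append_butlast_last_id list.size(3) nat.distinct(1))
      then show "\<exists>ys. length ys = j \<and> (\<exists>x. P ((xs @ ys) @ [x]))" using ys
        by (intro exI[of _ "butlast ys"]) (metis append_assoc length_butlast diff_Suc_1)
    qed
  qed
qed

lemma dset_alln: "dset S (k + j) P \<Longrightarrow> dset S k (\<lambda>xs. \<forall>ys. length ys = j \<longrightarrow> P (xs @ ys))"
proof -
  assume "dset S (k + j) P"
  then have "dset S k (\<lambda>xs. \<not> (\<exists>ys. length ys = j \<and> \<not> P (xs @ ys)))"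
    by (intro dset_not dset_exn[of k j "\<lambda>xs. \<not> P xs"] dset_not)
  thus ?thesis by simp
qed

lemma dset_diag: "i < k \<Longrightarrow> j < k \<Longrightarrow> dset S k (\<lambda>xs. xs ! i = xs ! j)"
  unfolding dset_def using rs_diag by blast

lemma dset_diags: "(\<forall>p<(m::nat). a p < k \<and> b p < k) \<Longrightarrow> dset S k (\<lambda>xs. \<forall>p<m. xs ! a p = xs ! b p)"
proof (induction m)
  case 0
  then show ?case using dset_True by simp
next
  case (Suc m)
  then have "dset S k (\<lambda>xs. (\<forall>p<m. xs ! a p = xs ! b p) \<and> xs ! a m = xs ! b m)"
    by (intro dset_conj dset_diag) auto
  then show ?case by (rule dset_congI) (auto simp: less_Suc_eq)
qed

lemma dset_prepend: "A \<in> S m \<Longrightarrow> dset S (j + m) (\<lambda>xs. drop j xs \<in> A)"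
proof (induction j)
  case 0
  then show ?case using dset_set by simp
next
  case (Suc j)
  then have "{xs. length xs = j + m \<and> drop j xs \<in> A} \<in> S (j + m)" by (simp add: dset_def)
  then have "{x # xs |x xs. xs \<in> {xs. length xs = j + m \<and> drop j xs \<in> A}} \<in> S (Suc (j + m))"
    using rs_cons by blast
  moreover have "{x # xs |x xs. xs \<in> {xs. length xs = j + m \<and> drop j xs \<in> A}} =
     {xs. length xs = Suc j + m \<and> drop (Suc j) xs \<in> A}"
  proof (rule set_eqI, rule iffI)
    fix ys assume "ys \<in> {xs. length xs = Suc j + m \<and> drop (Suc j) xs \<in> A}"
    then show "ys \<in> {x # xs |x xs. xs \<in> {xs. length xs = j + m \<and> drop j xs \<in> A}}"
    proof (cases ys)
      case Nil
      then show ?thesis using \<open>ys \<in> _\<close> by simp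
    next
      case (Cons y ys')
      then have "length ys' = j + m \<and> drop j ys' \<in> A" using \<open>ys \<in> _\<close> by simp
      then show ?thesis unfolding Cons by blast
    qed
  next
    fix ys assume "ys \<in> {x # xs |x xs. xs \<in> {xs. length xs = j + m \<and> drop j xs \<in> A}}"
    then obtain y ys' where "ys = y # ys'" "length ys' = j + m" "drop j ys' \<in> A" by blast
    then show "ys \<in> {xs. length xs = Suc j + m \<and> drop (Suc j) xs \<in> A}" by simp
  qed
  ultimately show ?case by (simp add: dset_def)
qed

lemma dset_mem:
  assumes A: "A \<in> S m" and idx: "length idx = m" "\<forall>i\<in>set idx. i < k"
  shows "dset S k (\<lambda>xs. map (\<lambda>i. xs ! i) idx \<in> A)"
proof -
  have "dset S (k + m) (\<lambda>zs. drop k zs \<in> A \<and> (\<forall>p<m. zs ! (k + p) = zs ! (idx ! p)))"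
  proof (intro dset_conj dset_diags allI impI)
    show "dset S (k + m) (\<lambda>zs. drop k zs \<in> A)" by (rule dset_prepend[OF A])
    fix p assume "p < m"
    then have "idx ! p < k" using idx nth_mem[of p idx] by auto
    then show "k + p < k + m \<and> idx ! p < k + m" using \<open>p < m\<close> by simp
  qed
  then have "dset S k (\<lambda>xs. \<exists>ys. length ys = m \<and> (drop k (xs @ ys) \<in> A \<and> (\<forall>p<m. (xs @ ys) ! (k + p) = (xs @ ys) ! (idx ! p))))"
    by (rule dset_exn)
  then show ?thesis
  proof (rule dset_congI)
    fix xs :: "real list" assume lx: "length xs = k"
    have nth_idx: "(xs @ ys) ! (idx ! p) = xs ! (idx ! p)" if "p < m" for ys p
      using idx that lx by (simp add: nth_append)
    show "(\<exists>ys. length ys = m \<and> drop k (xs @ ys) \<in> A \<and> (\<forall>p<m. (xs @ ys) ! (k + p) = (xs @ ys) ! (idx ! p))) =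
          (map ((!) xs) idx \<in> A)"
    proof
      assume "\<exists>ys. length ys = m \<and> drop k (xs @ ys) \<in> A \<and> (\<forall>p<m. (xs @ ys) ! (k + p) = (xs @ ys) ! (idx ! p))"
      then obtain ys where ys: "length ys = m" "drop k (xs @ ys) \<in> A" "\<forall>p<m. (xs @ ys) ! (k + p) = (xs @ ys) ! (idx ! p)" by blast
      have "ys = map ((!) xs) idx"
      proof (rule nth_equalityI)
        show "length ys = length (map ((!) xs) idx)" using ys idx by simp
        fix p assume "p < length ys"
        then show "ys ! p = map ((!) xs) idx ! p"
          using ys(3) nth_idx[of p ys] ys(1) idx lx by (auto simp: nth_append)
      qed
      then show "map ((!) xs) idx \<in> A" using ys lx by simp
    next
      assume "map ((!) xs) idx \<in> A"
      then show "\<exists>ys. length ys = m \<and> drop k (xs @ ys) \<in> A \<and> (\<forall>p<m. (xs @ ys) ! (k + p) = (xs @ ys) ! (idx ! p))"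
        using idx lx nth_idx by (intro exI[of _ "map ((!) xs) idx"]) (auto simp: nth_append)
    qed
  qed
qed

lemma dset_less: "i < k \<Longrightarrow> j < k \<Longrightarrow> dset S k (\<lambda>xs. xs ! i < xs ! j)"
proof -
  assume ij: "i < k" "j < k"
  have A: "{[x, y] |x y. x < y} \<in> S 2" by (rule rs_less)
  have "dset S k (\<lambda>xs. map (\<lambda>p. xs ! p) [i, j] \<in> {[x, y] |x y. x < y})"
    using ij by (intro dset_mem[OF A]) auto
  then show ?thesis by (rule dset_congI) auto
qed

lemma dset_le: "i < k \<Longrightarrow> j < k \<Longrightarrow> dset S k (\<lambda>xs. xs ! i \<le> xs ! j)"
proof -
  assume ij: "i < k" "j < k"
  have "dset S k (\<lambda>xs. \<not> xs ! j < xs ! i)" using ij by (intro dset_not dset_less)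
  then show ?thesis by (rule dset_congI) auto
qed

lemma dset_zero: "i < k \<Longrightarrow> dset S k (\<lambda>xs. xs ! i = 0)"
proof -
  assume i: "i < k"
  have A: "{[x, y, z] |x y z. x + y = z} \<in> S 3" by (rule rs_plus)
  have "dset S k (\<lambda>xs. map (\<lambda>p. xs ! p) [i, i, i] \<in> {[x, y, z] |x y z. x + y = z})"
    using i by (intro dset_mem[OF A]) auto
  then show ?thesis by (rule dset_congI) auto
qed

lemma dset_finex:
  assumes "finite F" "\<And>e. e \<in> F \<Longrightarrow> dset S k (P e)"
  shows "dset S k (\<lambda>xs. \<exists>e\<in>F. P e xs)"
  using assms
proof (induction F rule: finite_induct)
  case empty
  then show ?case using dset_False by simp
next
  case (insert x F)
  then have "dset S k (\<lambda>xs. P x xs \<or> (\<exists>e\<in>F. P e xs))" by (intro dset_disj) auto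
  then show ?case by (rule dset_congI) auto
qed

end


lemma ereal_interval_sub:
  assumes "a < ereal x" "ereal x < b"
  shows "\<exists>a' b'. a' < b' \<and> {a'<..<b'} \<subseteq> {y. a < ereal y \<and> ereal y < b}"
proof -
  obtain a' where a': "a < ereal a'" "ereal a' < ereal x" using ereal_dense2[OF assms(1)] by blast
  obtain b' where b': "ereal x < ereal b'" "ereal b' < b" using ereal_dense2[OF assms(2)] by blast
  have "a' < b'" using a' b' by simp
  moreover have "{a'<..<b'} \<subseteq> {y. a < ereal y \<and> ereal y < b}"
  proof
    fix y assume "y \<in> {a'<..<b'}"
    then have "ereal a' < ereal y" "ereal y < ereal b'" by auto
    then have "a < ereal y" "ereal y < b"
      using order_less_trans[OF a'(1)] order_less_trans[OF _ b'(2)] by blast+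
    then show "y \<in> {y. a < ereal y \<and> ereal y < b}" by simp
  qed
  ultimately show ?thesis by blast
qed

lemma fin_union_cases:
  assumes "fin_union_pts_intervals X"
  shows "(\<exists>a b. a < b \<and> {a<..<b} \<subseteq> X) \<or> finite X"
proof -
  obtain P J where PJ: "finite P" "finite (J :: (ereal \<times> ereal) set)"
    "X = P \<union> (\<Union>(a, b)\<in>J. {x. a < ereal x \<and> ereal x < b})"
    using assms unfolding fin_union_pts_intervals_def by blast
  show ?thesis
  proof (cases "\<exists>(a, b)\<in>J. \<exists>x. a < ereal x \<and> ereal x < b")
    case True
    then obtain a b x where "(a, b) \<in> J" "a < ereal x" "ereal x < b" by blast
    then obtain a' b' where "a' < b'" "{a'<..<b'} \<subseteq> {y. a < ereal y \<and> ereal y < b}"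
      using ereal_interval_sub by blast
    then have "{a'<..<b'} \<subseteq> X" using PJ(3) \<open>(a, b) \<in> J\<close> by blast
    then show ?thesis using \<open>a' < b'\<close> by blast
  next
    case False
    then have "X = P" using PJ(3) by blast
    then show ?thesis using PJ(1) by simp
  qed
qed

lemma fin_union_borel:
  assumes "fin_union_pts_intervals X"
  shows "X \<in> sets borel"
proof -
  obtain P J where PJ: "finite P" "finite (J :: (ereal \<times> ereal) set)"
    "X = P \<union> (\<Union>(a, b)\<in>J. {x. a < ereal x \<and> ereal x < b})"
    using assms unfolding fin_union_pts_intervals_def by blast
  have "P \<in> sets borel" using PJ(1) by (simp add: borel_closed finite_imp_closed)
  moreover have "{x. a < ereal x \<and> ereal x < b} \<in> sets borel" for a b :: ereal
  proof -
    have "{x. a < ereal x \<and> ereal x < b} = {x \<in> space borel. a < ereal x \<and> ereal x < b}" by simp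
    also have "\<dots> \<in> sets borel" by measurable
    finally show ?thesis .
  qed
  ultimately show ?thesis unfolding PJ(3) using PJ(2)
    by (intro sets.Un sets.finite_UN) auto
qed

lemma interval_infinite_pos:
  fixes a b :: real assumes "a < b" "{a<..<b} \<subseteq> X" "X \<in> sets borel"
  shows "infinite X" "0 < emeasure lborel X"
proof -
  show "infinite X" using assms infinite_Ioo finite_subset by blast
  have "emeasure lborel {a<..<b} \<le> emeasure lborel X"
    using assms by (intro emeasure_mono) auto
  moreover have "emeasure lborel {a<..<b} = ennreal (b - a)" using assms by simp
  ultimately show "0 < emeasure lborel X" using assms
    by (metis diff_gt_0_iff_gt ennreal_eq_0_iff not_gr_zero not_le order_less_le_trans zero_less_iff_neq_zero)
qed

lemma fin_union_iff:
  assumes "fin_union_pts_intervals X"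
  shows "(\<exists>a b. a < b \<and> {a<..<b} \<subseteq> X) \<longleftrightarrow> infinite X"
    and "(\<exists>a b. a < b \<and> {a<..<b} \<subseteq> X) \<longleftrightarrow> 0 < emeasure lborel X"
proof -
  have B: "X \<in> sets borel" by (rule fin_union_borel[OF assms])
  show "(\<exists>a b. a < b \<and> {a<..<b} \<subseteq> X) \<longleftrightarrow> infinite X"
    using fin_union_cases[OF assms] interval_infinite_pos[OF _ _ B] by blast
  have "finite X \<Longrightarrow> emeasure lborel X = 0"
    by (simp add: emeasure_lborel_countable countable_finite)
  then show "(\<exists>a b. a < b \<and> {a<..<b} \<subseteq> X) \<longleftrightarrow> 0 < emeasure lborel X"
    using fin_union_cases[OF assms] interval_infinite_pos[OF _ _ B] by fastforce
qed

context
  fixes S assumes rs: "real_structure S"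
begin

lemma dset_subst:
  assumes "dset S j P" "length idx = j" "\<forall>i\<in>set idx. i < k"
  shows "dset S k (\<lambda>xs. P (map (\<lambda>i. xs ! i) idx))"
proof -
  have A: "{xs. length xs = j \<and> P xs} \<in> S j" using assms(1) by (simp add: dset_def)
  have "dset S k (\<lambda>xs. map (\<lambda>i. xs ! i) idx \<in> {xs. length xs = j \<and> P xs})"
    by (rule dset_mem[OF rs A assms(2,3)])
  then show ?thesis by (rule dset_congI) (simp add: assms(2))
qed

lemma dset_interval:
  assumes P: "dset S (Suc m) P"
  shows "dset S m (\<lambda>xs. \<exists>a b. a < b \<and> (\<forall>x. a < x \<and> x < b \<longrightarrow> P (xs @ [x])))"
proof -
  let ?idx = "[0..<m] @ [m + 2]"
  have P': "dset S (m + 3) (\<lambda>zs. P (map (\<lambda>i. zs ! i) ?idx))"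
    by (rule dset_subst[OF P]) auto
  have "dset S (m + 3) (\<lambda>zs. zs ! m < zs ! (m + 1) \<and>
          (zs ! m < zs ! (m + 2) \<and> zs ! (m + 2) < zs ! (m + 1) \<longrightarrow> P (map (\<lambda>i. zs ! i) ?idx)))"
    by (intro dset_conj[OF rs] dset_imp[OF rs] dset_less[OF rs] P') auto
  then have "dset S (Suc (Suc m)) (\<lambda>ys. \<forall>x. (ys @ [x]) ! m < (ys @ [x]) ! (m + 1) \<and>
          ((ys @ [x]) ! m < (ys @ [x]) ! (m + 2) \<and> (ys @ [x]) ! (m + 2) < (ys @ [x]) ! (m + 1) \<longrightarrow>
            P (map (\<lambda>i. (ys @ [x]) ! i) ?idx)))"
    by (intro dset_all1[OF rs]) (simp add: numeral_3_eq_3)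
  then have "dset S (Suc m) (\<lambda>ys. \<exists>b. \<forall>x. ((ys @ [b]) @ [x]) ! m < ((ys @ [b]) @ [x]) ! (m + 1) \<and>
          (((ys @ [b]) @ [x]) ! m < ((ys @ [b]) @ [x]) ! (m + 2) \<and> ((ys @ [b]) @ [x]) ! (m + 2) < ((ys @ [b]) @ [x]) ! (m + 1) \<longrightarrow>
            P (map (\<lambda>i. ((ys @ [b]) @ [x]) ! i) ?idx)))"
    by (rule dset_ex1[OF rs])
  then have "dset S m (\<lambda>ys. \<exists>a. \<exists>b. \<forall>x. (((ys @ [a]) @ [b]) @ [x]) ! m < (((ys @ [a]) @ [b]) @ [x]) ! (m + 1) \<and>
          ((((ys @ [a]) @ [b]) @ [x]) ! m < (((ys @ [a]) @ [b]) @ [x]) ! (m + 2) \<and> (((ys @ [a]) @ [b]) @ [x]) ! (m + 2) < (((ys @ [a]) @ [b]) @ [x]) ! (m + 1) \<longrightarrow>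
            P (map (\<lambda>i. (((ys @ [a]) @ [b]) @ [x]) ! i) ?idx)))"
    by (rule dset_ex1[OF rs])
  then show ?thesis
  proof (rule dset_congI)
    fix xs :: "real list" assume lx: "length xs = m"
    have e1: "(((xs @ [a]) @ [b]) @ [x]) ! m = a" for a b x using lx by (simp add: nth_append)
    have e2: "(((xs @ [a]) @ [b]) @ [x]) ! (m + 1) = b" for a b x using lx by (simp add: nth_append)
    have e3: "(((xs @ [a]) @ [b]) @ [x]) ! (m + 2) = x" for a b x using lx by (simp add: nth_append)
    have e4: "map (\<lambda>i. (((xs @ [a]) @ [b]) @ [x]) ! i) ?idx = xs @ [x]" for a b x
    proof -
      have "map (\<lambda>i. (((xs @ [a]) @ [b]) @ [x]) ! i) [0..<m] = xs"
        using lx by (intro nth_equalityI) (auto simp: nth_append)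
      then show ?thesis using e3 by simp
    qed
    show "(\<exists>a b. \<forall>x. (((xs @ [a]) @ [b]) @ [x]) ! m < (((xs @ [a]) @ [b]) @ [x]) ! (m + 1) \<and>
          ((((xs @ [a]) @ [b]) @ [x]) ! m < (((xs @ [a]) @ [b]) @ [x]) ! (m + 2) \<and> (((xs @ [a]) @ [b]) @ [x]) ! (m + 2) < (((xs @ [a]) @ [b]) @ [x]) ! (m + 1) \<longrightarrow>
            P (map (\<lambda>i. (((xs @ [a]) @ [b]) @ [x]) ! i) ?idx))) =
          (\<exists>a b. a < b \<and> (\<forall>x. a < x \<and> x < b \<longrightarrow> P (xs @ [x])))"
      unfolding e1 e2 e3 e4 by blast
  qed
qed

end

lemma omin_rs: "o_minimal S \<Longrightarrow> real_structure S"
  unfolding o_minimal_def by blast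

lemma omin_fibre:
  assumes om: "o_minimal S" and P: "dset S (Suc m) P" and lp: "length p = m"
  shows "fin_union_pts_intervals {x. P (p @ [x])}"
proof -
  have rs: "real_structure S" using om by (rule omin_rs)
  let ?idx = "[1..<Suc m] @ [0]"
  have "dset S (Suc m) (\<lambda>ys. P (map (\<lambda>i. ys ! i) ?idx))"
    by (rule dset_subst[OF rs P]) auto
  then have A: "{ys. length ys = Suc m \<and> P (map (\<lambda>i. ys ! i) ?idx)} \<in> S (Suc m)"
    by (simp add: dset_def)
  have fa: "\<forall>A\<in>S (Suc m). \<forall>p. length p = m \<longrightarrow> fin_union_pts_intervals {x. x # p \<in> A}"
    using om unfolding o_minimal_def by blast
  have "fin_union_pts_intervals {x. x # p \<in> {ys. length ys = Suc m \<and> P (map (\<lambda>i. ys ! i) ?idx)}}"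
    using fa A lp by blast
  moreover have "map (\<lambda>i. (x # p) ! i) ?idx = p @ [x]" for x
  proof -
    have u: "[1..<Suc m] = map Suc [0..<m]" by (simp add: map_Suc_upt)
    have "map (\<lambda>i. (x # p) ! i) [1..<Suc m] = p"
      unfolding u using lp map_nth[of p] by (simp add: comp_def)
    then show ?thesis by simp
  qed
  ultimately show ?thesis using lp by simp
qed

lemma omin_fibre_iff:
  assumes om: "o_minimal S" and P: "dset S (Suc m) P" and lp: "length p = m"
  shows "(\<exists>a b. a < b \<and> (\<forall>x. a < x \<and> x < b \<longrightarrow> P (p @ [x]))) \<longleftrightarrow> infinite {x. P (p @ [x])}"
    and "(\<exists>a b. a < b \<and> (\<forall>x. a < x \<and> x < b \<longrightarrow> P (p @ [x]))) \<longleftrightarrow> 0 < emeasure lborel {x. P (p @ [x])}"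
    and "{x. P (p @ [x])} \<in> sets borel"
proof -
  have e0: "\<And>a b. (\<forall>x. a < x \<and> x < b \<longrightarrow> P (p @ [x])) \<longleftrightarrow> {a<..<b} \<subseteq> {x. P (p @ [x])}"
    by auto
  have eq: "(\<exists>a b. a < b \<and> (\<forall>x. a < x \<and> x < b \<longrightarrow> P (p @ [x]))) \<longleftrightarrow>
    (\<exists>a b. a < b \<and> {a<..<b} \<subseteq> {x. P (p @ [x])})" by (simp only: e0)
  show "(\<exists>a b. a < b \<and> (\<forall>x. a < x \<and> x < b \<longrightarrow> P (p @ [x]))) \<longleftrightarrow> infinite {x. P (p @ [x])}"
    unfolding eq by (rule fin_union_iff(1)[OF omin_fibre[OF assms]])
  show "(\<exists>a b. a < b \<and> (\<forall>x. a < x \<and> x < b \<longrightarrow> P (p @ [x]))) \<longleftrightarrow> 0 < emeasure lborel {x. P (p @ [x])}"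
    unfolding eq by (rule fin_union_iff(2)[OF omin_fibre[OF assms]])
  show "{x. P (p @ [x])} \<in> sets borel" by (rule fin_union_borel[OF omin_fibre[OF assms]])
qed



abbreviation LM :: "nat \<Rightarrow> (nat \<Rightarrow> real) measure" where
  "LM n \<equiv> PiM {..<n} (\<lambda>_. lborel)"

definition Yset :: "nat \<Rightarrow> (real list \<Rightarrow> bool) \<Rightarrow> real list \<Rightarrow> (nat \<Rightarrow> real) set" where
  "Yset n P p = {f \<in> space (LM n). P (p @ map f [0..<n])}"

lemma psf: "product_sigma_finite (\<lambda>_::nat. lborel :: real measure)"
  unfolding product_sigma_finite_def by (simp add: lborel.sigma_finite_measure_axioms)

lemma map_upd_last: "map (x(n := y)) [0..<Suc n] = map x [0..<n] @ [y]"
  by simp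

lemma lm_base:
  "emeasure (LM 0) (Yset 0 P p) > 0 \<longleftrightarrow> P p"
proof -
  have sp: "space (LM 0) = {\<lambda>_. undefined}" by (simp add: PiM_empty)
  show ?thesis
  proof (cases "P p")
    case True
    then have "Yset 0 P p = {\<lambda>_. undefined}" unfolding Yset_def sp by auto
    then show ?thesis using True by (simp add: PiM_empty)
  next
    case False
    then have "Yset 0 P p = {}" unfolding Yset_def sp by auto
    then show ?thesis using False by simp
  qed
qed

lemma lm_induct:
  assumes om: "o_minimal S"
  shows "dset S (m + n) P \<Longrightarrow> \<exists>Q. dset S m Q \<and> (\<forall>p. length p = m \<longrightarrow> Yset n P p \<in> sets (LM n) \<longrightarrow>
           (Q p \<longleftrightarrow> 0 < emeasure (LM n) (Yset n P p)))"
proof (induction n arbitrary: P)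
  case 0
  then have "dset S m P" by simp
  then show ?case using lm_base by blast
next
  case (Suc n)
  have rs: "real_structure S" using om by (rule omin_rs)
  have PS: "dset S (Suc (m + n)) P" using Suc.prems by simp
  define P1 where "P1 zs = (\<exists>a b. a < b \<and> (\<forall>x. a < x \<and> x < b \<longrightarrow> P (zs @ [x])))" for zs
  have "dset S (m + n) P1" unfolding P1_def by (rule dset_interval[OF rs PS])
  then obtain Q where Q: "dset S m Q" "\<And>p. length p = m \<Longrightarrow> Yset n P1 p \<in> sets (LM n) \<Longrightarrow>
           (Q p \<longleftrightarrow> 0 < emeasure (LM n) (Yset n P1 p))"
    using Suc.IH by blast
  interpret product_sigma_finite "\<lambda>_::nat. lborel :: real measure" by (rule psf)
  have "\<forall>p. length p = m \<longrightarrow> Yset (Suc n) P p \<in> sets (LM (Suc n)) \<longrightarrow>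
           (Q p \<longleftrightarrow> 0 < emeasure (LM (Suc n)) (Yset (Suc n) P p))"
  proof (intro allI impI)
    fix p :: "real list" assume lp: "length p = m" and Ym: "Yset (Suc n) P p \<in> sets (LM (Suc n))"
    let ?Y = "Yset (Suc n) P p"
    define g where "g x = emeasure lborel {y. P ((p @ map x [0..<n]) @ [y])}" for x :: "nat \<Rightarrow> real"
    have ins: "{..<Suc n} = insert n {..<n}" by auto
    have upd_sp: "x(n := y) \<in> space (LM (Suc n))" if "x \<in> space (LM n)" for x y
      using that unfolding space_PiM ins by (intro PiE_fun_upd) auto
    have ind: "indicator ?Y (x(n := y)) = indicator {y. P ((p @ map x [0..<n]) @ [y])} y"
      if "x \<in> space (LM n)" for x y
      using upd_sp[OF that] unfolding Yset_def by (simp add: indicator_def)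
    have fibB: "{y. P ((p @ map x [0..<n]) @ [y])} \<in> sets borel" for x
      by (rule omin_fibre_iff(3)[OF om PS]) (simp add: lp)
    have fibpos: "0 < g x \<longleftrightarrow> P1 (p @ map x [0..<n])" for x
      unfolding g_def P1_def using omin_fibre_iff(2)[OF om PS, of "p @ map x [0..<n]"] lp by simp
    have inner: "(\<integral>\<^sup>+ y. indicator ?Y (x(n := y)) \<partial>lborel) = g x" if "x \<in> space (LM n)" for x
    proof -
      have "(\<integral>\<^sup>+ y. indicator ?Y (x(n := y)) \<partial>lborel) =
            (\<integral>\<^sup>+ y. indicator {y. P ((p @ map x [0..<n]) @ [y])} y \<partial>lborel)"
        by (rule nn_integral_cong, rule ind[OF that])
      also have "\<dots> = g x" unfolding g_def by (rule nn_integral_indicator) (use fibB[of x] in simp)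
      finally show ?thesis .
    qed
    have meas_ind: "indicator ?Y \<in> borel_measurable (LM (Suc n))"
      using Ym by simp
    have "emeasure (LM (Suc n)) ?Y = integral\<^sup>N (LM (Suc n)) (indicator ?Y)"
      using Ym by simp
    also have "\<dots> = integral\<^sup>N (PiM (insert n {..<n}) (\<lambda>_. lborel)) (indicator ?Y)"
      by (simp add: ins)
    also have "\<dots> = (\<integral>\<^sup>+ x. (\<integral>\<^sup>+ y. indicator ?Y (x(n := y)) \<partial>lborel) \<partial>LM n)"
      by (rule product_nn_integral_insert) (use meas_ind ins in auto)
    also have "\<dots> = (\<integral>\<^sup>+ x. g x \<partial>LM n)"
    proof (rule nn_integral_cong)
      fix x assume "x \<in> space (LM n)"
      then show "(\<integral>\<^sup>+ y. indicator ?Y (x(n := y)) \<partial>lborel) = g x"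
        by (rule inner)
    qed
    finally have E: "emeasure (LM (Suc n)) ?Y = (\<integral>\<^sup>+ x. g x \<partial>LM n)" .
    have gm0: "(\<lambda>x. \<integral>\<^sup>+ y. indicator ?Y (x(n := y)) \<partial>lborel) \<in> borel_measurable (LM n)"
    proof -
      have "(\<lambda>z. (fst z)(n := snd z)) \<in> measurable (LM n \<Otimes>\<^sub>M lborel) (LM (Suc n))"
        by (rule measurable_fun_upd[where J="{..<n}"]) (auto simp: ins)
      then have "(\<lambda>z. indicator ?Y ((fst z)(n := snd z))) \<in> borel_measurable (LM n \<Otimes>\<^sub>M lborel)"
        using meas_ind by (rule measurable_compose)
      then have "case_prod (\<lambda>x y. indicator ?Y (x(n := y))) \<in> borel_measurable (LM n \<Otimes>\<^sub>M lborel)"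
        by (simp add: case_prod_beta')
      then show ?thesis by (rule lborel.borel_measurable_nn_integral)
    qed
    have gm: "g \<in> borel_measurable (LM n)"
    proof (rule measurable_cong[THEN iffD1, OF _ gm0])
      fix x assume "x \<in> space (LM n)"
      then show "(\<integral>\<^sup>+ y. indicator ?Y (x(n := y)) \<partial>lborel) = g x"
        by (rule inner)
    qed
    have Y1: "Yset n P1 p = {x \<in> space (LM n). g x \<noteq> 0}"
      unfolding Yset_def using fibpos by (auto simp: zero_less_iff_neq_zero)
    have Y1m: "Yset n P1 p \<in> sets (LM n)"
      unfolding Y1 using gm by measurable
    have "0 < emeasure (LM (Suc n)) ?Y \<longleftrightarrow> 0 < emeasure (LM n) (Yset n P1 p)"
      unfolding E Y1 using nn_integral_0_iff[OF gm] by (simp add: zero_less_iff_neq_zero)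
    then show "Q p \<longleftrightarrow> 0 < emeasure (LM (Suc n)) ?Y" using Q(2)[OF lp Y1m] by simp
  qed
  then show ?case using Q(1) by blast
qed



lemma len_enum: "length (enum_class.enum :: 'n::enum list) = CARD('n::enum)"
proof -
  have "card (set (enum_class.enum :: 'n::enum list)) = length (enum_class.enum :: 'n::enum list)"
    by (rule distinct_card[OF enum_distinct])
  then show ?thesis unfolding UNIV_enum by (rule sym)
qed

definition eidx :: "'n::enum \<Rightarrow> nat" where
  "eidx i = (THE j. j < CARD('n::enum) \<and> enum_class.enum ! j = i)"

lemma eidx: "eidx (i::'n::enum) < CARD('n::enum) \<and> enum_class.enum ! (eidx i) = i"
proof -
  have "i \<in> set (enum_class.enum :: 'n::enum list)" by (simp add: enum_UNIV)
  then obtain j where j: "j < CARD('n::enum)" "(enum_class.enum :: 'n::enum list) ! j = i"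
    using len_enum[where 'n='n] by (auto simp: in_set_conv_nth)
  have uq: "k = j" if kk: "k < CARD('n::enum) \<and> (enum_class.enum :: 'n::enum list) ! k = i" for k
  proof -
    have l: "k < length (enum_class.enum :: 'n::enum list)" "j < length (enum_class.enum :: 'n::enum list)"
      using kk j len_enum[where 'n='n] by linarith+
    have "(enum_class.enum :: 'n::enum list) ! k = enum_class.enum ! j" using kk j by simp
    then show "k = j" by (rule iffD1[OF nth_eq_iff_index_eq[OF enum_distinct l]])
  qed
  have jj: "j < CARD('n::enum) \<and> (enum_class.enum :: 'n::enum list) ! j = i" using j by (rule conjI)
  have "eidx i = j" unfolding eidx_def by (rule the_equality[where P="\<lambda>k. k < CARD('n::enum) \<and> (enum_class.enum :: 'n::enum list) ! k = i", OF jj uq])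
  then show ?thesis using jj by (simp only:)
qed

lemma eidx_nth: "j < CARD('n::enum) \<Longrightarrow> eidx ((enum_class.enum :: 'n::enum list) ! j) = j"
proof -
  assume j: "j < CARD('n::enum)"
  have e: "eidx ((enum_class.enum :: 'n::enum list) ! j) < CARD('n::enum)"
     "(enum_class.enum :: 'n::enum list) ! eidx ((enum_class.enum :: 'n::enum list) ! j) = (enum_class.enum :: 'n::enum list) ! j"
    using eidx[of "(enum_class.enum :: 'n::enum list) ! j"] by auto
  have l: "eidx ((enum_class.enum :: 'n::enum list) ! j) < length (enum_class.enum :: 'n::enum list)"
     "j < length (enum_class.enum :: 'n::enum list)"
    using e j len_enum[where 'n='n] by linarith+
  show ?thesis by (rule iffD1[OF nth_eq_iff_index_eq[OF enum_distinct l] e(2)])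
qed

definition toVec :: "(nat \<Rightarrow> real) \<Rightarrow> real ^ 'n::enum" where
  "toVec f = (\<chi> i. f (eidx i))"

lemma length_vlist[simp]: "length (vlist (v :: real ^ 'n::enum)) = CARD('n::enum)"
  by (simp add: vlist_def len_enum)

lemma vlist_nth: "j < CARD('n::enum) \<Longrightarrow> vlist (v :: real ^ 'n::enum) ! j = v $ (enum_class.enum ! j)"
  by (simp add: vlist_def len_enum)

lemma vlist_toVec: "vlist (toVec f :: real ^ 'n::enum) = map f [0..<CARD('n::enum)]"
  by (rule nth_equalityI) (auto simp: vlist_nth toVec_def eidx_nth)

lemma vlist_inj: "vlist (v :: real ^ 'n::enum) = vlist w \<Longrightarrow> v = w"
proof -
  assume a: "vlist v = vlist w"
  have "v $ i = w $ i" for i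
    using arg_cong[OF a, of "\<lambda>xs. xs ! eidx i"] eidx[of i] by (simp add: vlist_nth)
  then show "v = w" by (simp add: vec_eq_iff)
qed

lemma vlist_surj: "length xs = CARD('n::enum) \<Longrightarrow> \<exists>v :: real ^ 'n::enum. vlist v = xs"
proof -
  assume l: "length xs = CARD('n::enum)"
  have "vlist (toVec (\<lambda>j. xs ! j) :: real ^ 'n::enum) = xs"
    unfolding vlist_toVec l[symmetric] by (simp add: map_nth)
  then show ?thesis by blast
qed

lemma definable_iff:
  assumes "\<And>v. v \<in> X \<longleftrightarrow> P (vlist v)"
  shows "definable S (X :: (real ^ 'n::enum) set) \<longleftrightarrow> dset S CARD('n::enum) P"
proof -
  have "vlist ` X = {xs. length xs = CARD('n::enum) \<and> P xs}"
  proof (rule set_eqI, rule iffI)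
    fix xs assume "xs \<in> vlist ` X" then show "xs \<in> {xs. length xs = CARD('n::enum) \<and> P xs}"
      using assms by auto
  next
    fix xs assume xs: "xs \<in> {xs. length xs = CARD('n::enum) \<and> P xs}"
    then obtain v :: "real ^ 'n::enum" where "vlist v = xs" using vlist_surj by blast
    then show "xs \<in> vlist ` X" using xs assms by auto
  qed
  then show ?thesis unfolding definable_def dset_def by simp
qed

lemma toVec_meas: "(toVec :: (nat \<Rightarrow> real) \<Rightarrow> real ^ 'n::enum) \<in> borel_measurable (LM CARD('n::enum))"
proof (subst borel_measurable_euclidean_space, intro ballI)
  fix b :: "real ^ 'n::enum" assume "b \<in> Basis"
  then obtain i where b: "b = axis i 1" unfolding Basis_vec_def by auto
  have "(\<lambda>x. toVec x \<bullet> b) = (\<lambda>x. x (eidx i))"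
    unfolding b by (simp add: toVec_def cart_eq_inner_axis[symmetric])
  moreover have "(\<lambda>x. x (eidx i)) \<in> borel_measurable (LM CARD('n::enum))"
    using eidx[of i] measurable_component_singleton[of "eidx i" "{..<CARD('n::enum)}" "\<lambda>_. lborel"] by simp
  ultimately show "(\<lambda>x. toVec x \<bullet> b) \<in> borel_measurable (LM CARD('n::enum))" by simp
qed

lemma lborel_toVec: "(lborel :: (real ^ 'n::enum) measure) = distr (LM CARD('n::enum)) borel toVec"
proof (rule lborel_eqI)
  show "sets (distr (LM CARD('n::enum)) borel toVec) = sets (borel :: (real ^ 'n::enum) measure)" by simp
  fix l u :: "real ^ 'n::enum" assume lu: "\<And>b. b \<in> Basis \<Longrightarrow> l \<bullet> b \<le> u \<bullet> b"
  then have lu': "l $ i \<le> u $ i" for i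
    using lu[of "axis i 1"] by (auto simp: Basis_vec_def cart_eq_inner_axis)
  interpret product_sigma_finite "\<lambda>_::nat. lborel :: real measure" by (rule psf)
  have pre: "toVec -` box l u \<inter> space (LM CARD('n::enum)) =
      PiE {..<CARD('n::enum)} (\<lambda>j. {l $ (enum_class.enum ! j) <..< u $ (enum_class.enum ! j)})"
  proof (rule set_eqI)
    fix f :: "nat \<Rightarrow> real"
    have A: "(\<forall>i::'n::enum. l $ i < f (eidx i) \<and> f (eidx i) < u $ i) \<longleftrightarrow>
          (\<forall>j<CARD('n::enum). l $ (enum_class.enum ! j) < f j \<and> f j < u $ (enum_class.enum ! j))"
    proof
      assume H: "\<forall>i::'n::enum. l $ i < f (eidx i) \<and> f (eidx i) < u $ i"
      show "\<forall>j<CARD('n::enum). l $ (enum_class.enum ! j) < f j \<and> f j < u $ (enum_class.enum ! j)"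
      proof (intro allI impI)
        fix j assume "j < CARD('n::enum)"
        then have "eidx ((enum_class.enum :: 'n::enum list) ! j) = j" by (rule eidx_nth)
        then show "l $ (enum_class.enum ! j) < f j \<and> f j < u $ (enum_class.enum ! j)"
          using H[rule_format, of "(enum_class.enum :: 'n::enum list) ! j"] by simp
      qed
    next
      assume H: "\<forall>j<CARD('n::enum). l $ (enum_class.enum ! j) < f j \<and> f j < u $ (enum_class.enum ! j)"
      show "\<forall>i::'n::enum. l $ i < f (eidx i) \<and> f (eidx i) < u $ i"
      proof
        fix i :: "'n::enum"
        show "l $ i < f (eidx i) \<and> f (eidx i) < u $ i"
          using H[rule_format, of "eidx i"] eidx[of i] by simp
      qed
    qed
    have mb: "toVec f \<in> box l u \<longleftrightarrow> (\<forall>i::'n::enum. l $ i < f (eidx i) \<and> f (eidx i) < u $ i)"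
      by (simp add: mem_box_cart toVec_def)
    have sp: "f \<in> space (LM CARD('n::enum)) \<longleftrightarrow> f \<in> extensional {..<CARD('n::enum)}"
      by (simp add: space_PiM PiE_def)
    have pe: "f \<in> PiE {..<CARD('n::enum)} (\<lambda>j. {l $ (enum_class.enum ! j) <..< u $ (enum_class.enum ! j)}) \<longleftrightarrow>
       (\<forall>j<CARD('n::enum). l $ (enum_class.enum ! j) < f j \<and> f j < u $ (enum_class.enum ! j)) \<and> f \<in> extensional {..<CARD('n::enum)}"
      by (simp add: PiE_def Pi_def)
    show "f \<in> toVec -` box l u \<inter> space (LM CARD('n::enum)) \<longleftrightarrow>
      f \<in> PiE {..<CARD('n::enum)} (\<lambda>j. {l $ (enum_class.enum ! j) <..< u $ (enum_class.enum ! j)})"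
      unfolding pe using A mb sp by blast
  qed
  have "emeasure (distr (LM CARD('n::enum)) borel toVec) (box l u) =
        emeasure (LM CARD('n::enum)) (toVec -` box l u \<inter> space (LM CARD('n::enum)))"
    by (rule emeasure_distr[OF toVec_meas]) simp
  also have "\<dots> = (\<Prod>j<CARD('n::enum). emeasure lborel {l $ (enum_class.enum ! j) <..< u $ (enum_class.enum ! j)})"
    unfolding pre by (rule emeasure_PiM) auto
  also have "\<dots> = (\<Prod>j<CARD('n::enum). ennreal (u $ (enum_class.enum ! j) - l $ (enum_class.enum ! j)))"
    using lu' by (intro prod.cong) auto
  also have "\<dots> = ennreal (\<Prod>j<CARD('n::enum). u $ (enum_class.enum ! j) - l $ (enum_class.enum ! j))"
    using lu' by (intro prod_ennreal) auto
  also have "(\<Prod>j<CARD('n::enum). u $ (enum_class.enum ! j) - l $ (enum_class.enum ! j)) = (\<Prod>i\<in>UNIV. u $ i - l $ i)"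
  proof (rule prod.reindex_bij_witness[where i="\<lambda>i. eidx i" and j="\<lambda>j. enum_class.enum ! j"])
  qed (auto simp: eidx eidx_nth)
  also have "(\<Prod>i\<in>UNIV. u $ i - l $ i) = (\<Prod>b\<in>Basis. (u - l) \<bullet> b)"
    by (simp add: Basis_vec_def cart_eq_inner_axis axis_eq_axis prod.UNION_disjoint inner_diff_left)
  finally show "emeasure (distr (LM CARD('n::enum)) borel toVec) (box l u) = (\<Prod>b\<in>Basis. (u - l) \<bullet> b)" .
qed

lemma vec_pos:
  assumes om: "o_minimal S" and P: "dset S (m + CARD('n::enum)) P"
  shows "\<exists>Q. dset S m Q \<and> (\<forall>p. length p = m \<longrightarrow> {x :: real ^ 'n::enum. P (p @ vlist x)} \<in> sets borel \<longrightarrow>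
            (Q p \<longleftrightarrow> 0 < emeasure lborel {x :: real ^ 'n::enum. P (p @ vlist x)}))"
proof -
  from lm_induct[OF om P] obtain Q where Q1: "dset S m Q" and Q2: "\<forall>p. length p = m \<longrightarrow> Yset CARD('n::enum) P p \<in> sets (LM CARD('n::enum)) \<longrightarrow>
           (Q p \<longleftrightarrow> 0 < emeasure (LM CARD('n::enum)) (Yset CARD('n::enum) P p))"
    by (elim exE conjE)
  note Q = Q1 Q2[rule_format]
  have "\<forall>p. length p = m \<longrightarrow> {x :: real ^ 'n::enum. P (p @ vlist x)} \<in> sets borel \<longrightarrow>
            (Q p \<longleftrightarrow> 0 < emeasure lborel {x :: real ^ 'n::enum. P (p @ vlist x)})"
  proof (intro allI impI)
    fix p :: "real list" assume lp: "length p = m" and X: "{x :: real ^ 'n::enum. P (p @ vlist x)} \<in> sets borel"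
    let ?X = "{x :: real ^ 'n::enum. P (p @ vlist x)}"
    have Y: "Yset CARD('n::enum) P p = (toVec :: _ \<Rightarrow> real ^ 'n::enum) -` ?X \<inter> space (LM CARD('n::enum))"
      unfolding Yset_def by (simp add: vlist_toVec set_eq_iff conj_commute)
    have Ym: "Yset CARD('n::enum) P p \<in> sets (LM CARD('n::enum))"
      unfolding Y by (rule measurable_sets[OF toVec_meas X])
    have "emeasure (lborel :: (real ^ 'n::enum) measure) ?X = emeasure (LM CARD('n::enum)) (Yset CARD('n::enum) P p)"
      unfolding Y by (subst lborel_toVec) (rule emeasure_distr[OF toVec_meas X])
    then show "Q p \<longleftrightarrow> 0 < emeasure lborel ?X" using Q(2)[OF lp Ym] by simp
  qed
  then show ?thesis using Q(1) by blast
qed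



lemma prob_restrict:
  assumes "prob_space M" "R \<in> sets M" "emeasure M R = 1" "D \<in> sets M"
  shows "emeasure M D = emeasure M (D \<inter> R)"
proof -
  interpret prob_space M by fact
  have "emeasure M (space M - R) = emeasure M (space M) - emeasure M R"
    using assms by (intro emeasure_compl) auto
  then have c: "emeasure M (space M - R) = 0" using assms(3) emeasure_space_1 by simp
  have "emeasure M (D - R) \<le> emeasure M (space M - R)"
    using assms sets.sets_into_space by (intro emeasure_mono) auto
  then have z: "emeasure M (D - R) = 0" using c by simp
  have "emeasure M (D \<inter> R) + emeasure M (D - R) = emeasure M ((D \<inter> R) \<union> (D - R))"
    using assms by (intro plus_emeasure) auto
  also have "(D \<inter> R) \<union> (D - R) = D" by auto
  finally show ?thesis using z by simp
qed

lemma app_vlist: "vlist (a :: real ^ 'n::enum) @ xs = vlist b @ ys \<longleftrightarrow> a = b \<and> xs = ys"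
proof
  assume "vlist a @ xs = vlist b @ ys"
  then have "vlist a = vlist b \<and> xs = ys"
    using append_eq_append_conv[of "vlist a" "vlist b" xs ys] by simp
  then show "a = b \<and> xs = ys" using vlist_inj by blast
qed simp

lemma vmem: "vlist (x :: real ^ 'n::enum) \<in> vlist ` X \<longleftrightarrow> x \<in> X"
  using vlist_inj by blast

lemma dset_nonneg:
  assumes rs: "real_structure S" and i: "i < k"
  shows "dset S k (\<lambda>xs. 0 \<le> xs ! i)"
proof -
  have "dset S (Suc k) (\<lambda>ws. ws ! k = 0 \<and> ws ! k \<le> ws ! i)"
    using i by (intro dset_conj[OF rs] dset_zero[OF rs] dset_le[OF rs]) auto
  then have "dset S k (\<lambda>xs. \<exists>z. (xs @ [z]) ! k = 0 \<and> (xs @ [z]) ! k \<le> (xs @ [z]) ! i)"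
    by (rule dset_ex1[OF rs])
  then show ?thesis
  proof (rule dset_congI)
    fix xs :: "real list" assume "length xs = k"
    then show "(\<exists>z. (xs @ [z]) ! k = 0 \<and> (xs @ [z]) ! k \<le> (xs @ [z]) ! i) = (0 \<le> xs ! i)"
      using i by (auto simp: nth_append)
  qed
qed

locale shsc =
  fixes S :: "nat \<Rightarrow> real list set set"
    and E :: "('l::finite \<times> 'a \<times> 'l) set"
    and Inv :: "'l \<Rightarrow> (real ^ 'n::enum) set"
    and \<gamma> :: "'l \<Rightarrow> real ^ 'n::enum \<Rightarrow> real \<Rightarrow> real ^ 'n::enum"
    and G :: "('l \<times> 'a \<times> 'l) \<Rightarrow> (real ^ 'n::enum) set"
    and R :: "('l \<times> 'a \<times> 'l) \<Rightarrow> real ^ 'n::enum \<Rightarrow> (real ^ 'n::enum) set"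
    and \<mu> :: "'l \<times> (real ^ 'n::enum) \<Rightarrow> real measure"
    and w :: "'l \<times> (real ^ 'n::enum) \<Rightarrow> ('l \<times> 'a \<times> 'l) \<Rightarrow> real"
    and \<eta> :: "('l \<times> 'a \<times> 'l) \<Rightarrow> real ^ 'n::enum \<Rightarrow> (real ^ 'n::enum) measure"
  assumes omin: "o_minimal S"
    and shs: "is_shs E Inv \<gamma> G R \<mu> w \<eta>"
    and defd: "shs_defined_in S E Inv \<gamma> G R"
    and delay: "\<forall>s. (finite (I_state E Inv \<gamma> G s) \<longrightarrow>
                       equiv_on (\<mu> s) (uniform_count_measure (I_state E Inv \<gamma> G s)) (I_state E Inv \<gamma> G s))
                   \<and> (infinite (I_state E Inv \<gamma> G s) \<longrightarrow>
                       equiv_on (\<mu> s) lborel (I_state E Inv \<gamma> G s))"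
    and reset: "\<forall>e\<in>E. \<forall>v. (finite (R e v) \<longrightarrow> equiv_on (\<eta> e v) (count_space UNIV) (R e v))
                   \<and> (infinite (R e v) \<longrightarrow> 0 < emeasure lborel (R e v) \<and> equiv_on (\<eta> e v) lborel (R e v))"

context shsc
begin

lemmas shs1 = shs[unfolded is_shs_def, THEN conjunct1]
lemmas shs2 = shs[unfolded is_shs_def, THEN conjunct2, THEN conjunct1]
lemmas shs3 = shs[unfolded is_shs_def, THEN conjunct2, THEN conjunct2, THEN conjunct1]
lemmas shs4 = shs[unfolded is_shs_def, THEN conjunct2, THEN conjunct2, THEN conjunct2, THEN conjunct1]
lemmas shs6 = shs[unfolded is_shs_def, THEN conjunct2, THEN conjunct2, THEN conjunct2, THEN conjunct2, THEN conjunct2, THEN conjunct1]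
lemmas shs7 = shs[unfolded is_shs_def, THEN conjunct2, THEN conjunct2, THEN conjunct2, THEN conjunct2, THEN conjunct2, THEN conjunct2]
lemmas defd1 = defd[unfolded shs_defined_in_def, THEN conjunct1]
lemmas defd2 = defd[unfolded shs_defined_in_def, THEN conjunct2, THEN conjunct1]
lemmas defd3 = defd[unfolded shs_defined_in_def, THEN conjunct2, THEN conjunct2, THEN conjunct1]
lemmas defd4 = defd[unfolded shs_defined_in_def, THEN conjunct2, THEN conjunct2, THEN conjunct2]

lemma rs: "real_structure S" by (rule omin_rs[OF omin])

lemma Gam:
  "vlist v @ [t] @ ys \<in> {vlist v' @ [t'] @ vlist (\<gamma> l0 v' t') |v' t'. 0 \<le> t'} \<longleftrightarrow> 0 \<le> t \<and> ys = vlist (\<gamma> l0 v t)"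
proof
  assume "vlist v @ [t] @ ys \<in> {vlist v' @ [t'] @ vlist (\<gamma> l0 v' t') |v' t'. 0 \<le> t'}"
  then obtain v' t' where "vlist v @ [t] @ ys = vlist v' @ [t'] @ vlist (\<gamma> l0 v' t')" "0 \<le> t'" by blast
  then show "0 \<le> t \<and> ys = vlist (\<gamma> l0 v t)" by (simp add: app_vlist)
qed blast

lemma flowpred:
  assumes Q: "dset S CARD('n::enum) Q"
  shows "\<exists>F. dset S (Suc CARD('n::enum)) F \<and> (\<forall>v t. F (vlist v @ [t]) \<longleftrightarrow> 0 \<le> t \<and> Q (vlist (\<gamma> l0 v t)))"
proof -
  let ?\<Gamma> = "{vlist v' @ [t'] @ vlist (\<gamma> l0 v' t') |v' t'. 0 \<le> t'}"
  have \<Gamma>: "?\<Gamma> \<in> S (Suc CARD('n::enum) + CARD('n::enum))"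
    using defd1[rule_format, of l0] by (simp add: mult_2)
  have A: "{xs. length xs = CARD('n::enum) \<and> Q xs} \<in> S CARD('n::enum)" using Q by (simp add: dset_def)
  have "dset S (Suc CARD('n::enum) + CARD('n::enum)) (\<lambda>ws. ws \<in> ?\<Gamma> \<and> drop (Suc CARD('n::enum)) ws \<in> {xs. length xs = CARD('n::enum) \<and> Q xs})"
    by (intro dset_conj[OF rs] dset_set[OF rs \<Gamma>] dset_prepend[OF rs A])
  then have "dset S (Suc CARD('n::enum)) (\<lambda>zs. \<exists>ys. length ys = CARD('n::enum) \<and>
      (zs @ ys \<in> ?\<Gamma> \<and> drop (Suc CARD('n::enum)) (zs @ ys) \<in> {xs. length xs = CARD('n::enum) \<and> Q xs}))"
    by (rule dset_exn[OF rs])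
  moreover have "(\<exists>ys. length ys = CARD('n::enum) \<and>
      ((vlist v @ [t]) @ ys \<in> ?\<Gamma> \<and> drop (Suc CARD('n::enum)) ((vlist v @ [t]) @ ys) \<in> {xs. length xs = CARD('n::enum) \<and> Q xs}))
      \<longleftrightarrow> 0 \<le> t \<and> Q (vlist (\<gamma> l0 v t))" for v t
  proof -
    have d: "drop (Suc CARD('n::enum)) ((vlist v @ [t]) @ ys) = ys" for ys by simp
    have g: "(vlist v @ [t]) @ ys \<in> ?\<Gamma> \<longleftrightarrow> 0 \<le> t \<and> ys = vlist (\<gamma> l0 v t)" for ys
      using Gam[of v t ys l0] by simp
    show ?thesis unfolding d g by auto
  qed
  ultimately show ?thesis by blast
qed

end


context shsc
begin

lemma eta_facts:
  assumes "e \<in> E"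
  shows "prob_space (\<eta> e u)" "sets (\<eta> e u) = sets borel" "emeasure (\<eta> e u) (R e u) = 1"
  using shs6 assms by blast+

lemma pos_eta:
  assumes e: "e \<in> E" and DB: "D \<in> sets borel" and DD: "definable S D"
  shows "\<exists>Q. dset S CARD('n::enum) Q \<and> (\<forall>u. Q (vlist u) \<longleftrightarrow> 0 < emeasure (\<eta> e u) D)"
proof -
  define RR where "RR = {vlist v @ vlist v' |v v'. v' \<in> R e v}"
  have RR: "RR \<in> S (CARD('n::enum) + CARD('n::enum))" unfolding RR_def using defd4 e by (simp add: mult_2)
  have rrm: "vlist u @ vlist x \<in> RR \<longleftrightarrow> x \<in> R e u" for u x
    unfolding RR_def by (auto simp: app_vlist dest: vlist_inj)
  have DS: "vlist ` D \<in> S CARD('n::enum)" using DD unfolding definable_def .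
  have PR: "dset S (CARD('n::enum) + CARD('n::enum)) (\<lambda>zs. zs \<in> RR)" by (rule dset_set[OF rs RR])
  have PDR: "dset S (CARD('n::enum) + CARD('n::enum)) (\<lambda>zs. zs \<in> RR \<and> drop CARD('n::enum) zs \<in> vlist ` D)"
    by (intro dset_conj[OF rs] PR dset_prepend[OF rs DS])
  obtain QR where QR: "dset S CARD('n::enum) QR" "\<forall>p. length p = CARD('n::enum) \<longrightarrow>
      {x :: real ^ 'n::enum. p @ vlist x \<in> RR} \<in> sets borel \<longrightarrow>
      (QR p \<longleftrightarrow> 0 < emeasure lborel {x :: real ^ 'n::enum. p @ vlist x \<in> RR})"
    using vec_pos[OF omin PR] by blast
  obtain QD where QD: "dset S CARD('n::enum) QD" "\<forall>p. length p = CARD('n::enum) \<longrightarrow>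
      {x :: real ^ 'n::enum. p @ vlist x \<in> RR \<and> drop CARD('n::enum) (p @ vlist x) \<in> vlist ` D} \<in> sets borel \<longrightarrow>
      (QD p \<longleftrightarrow> 0 < emeasure lborel {x :: real ^ 'n::enum. p @ vlist x \<in> RR \<and> drop CARD('n::enum) (p @ vlist x) \<in> vlist ` D})"
    using vec_pos[OF omin PDR] by blast
  define Q where "Q zs = ((QR zs \<and> QD zs) \<or> (\<not> QR zs \<and> (\<exists>ys. length ys = CARD('n::enum) \<and>
      ((zs @ ys) \<in> RR \<and> drop CARD('n::enum) (zs @ ys) \<in> vlist ` D))))" for zs
  have dQ: "dset S CARD('n::enum) Q"
    unfolding Q_def
    by (intro dset_disj[OF rs] dset_conj[OF rs] QR(1) QD(1) dset_not[OF rs] dset_exn[OF rs PDR])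
  have "Q (vlist u) \<longleftrightarrow> 0 < emeasure (\<eta> e u) D" for u
  proof -
    let ?Ru = "R e u"
    have f1: "{x :: real ^ 'n::enum. vlist u @ vlist x \<in> RR} = ?Ru" using rrm by auto
    have f2: "{x :: real ^ 'n::enum. vlist u @ vlist x \<in> RR \<and> drop CARD('n::enum) (vlist u @ vlist x) \<in> vlist ` D} = D \<inter> ?Ru"
    proof (rule set_eqI)
      fix x :: "real ^ 'n::enum"
      have dr: "drop CARD('n::enum) (vlist u @ vlist x) = vlist x" by simp
      show "x \<in> {x :: real ^ 'n::enum. vlist u @ vlist x \<in> RR \<and> drop CARD('n::enum) (vlist u @ vlist x) \<in> vlist ` D} \<longleftrightarrow> x \<in> D \<inter> ?Ru"
        by (simp only: mem_Collect_eq rrm dr vmem Int_iff conj_commute)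
    qed
    note ef = eta_facts[OF e, of u]
    have RuB: "?Ru \<in> sets borel"
    proof (rule ccontr)
      assume "?Ru \<notin> sets borel"
      then have "emeasure (\<eta> e u) ?Ru = 0" using ef(2) by (simp add: emeasure_notin_sets)
      then show False using ef(3) by simp
    qed
    have DRB: "D \<inter> ?Ru \<in> sets borel" using RuB DB by auto
    have eqD: "emeasure (\<eta> e u) D = emeasure (\<eta> e u) (D \<inter> ?Ru)"
      using ef RuB DB by (intro prob_restrict) auto
    have QRu: "QR (vlist u) \<longleftrightarrow> 0 < emeasure lborel ?Ru"
      using QR(2)[rule_format, of "vlist u"] f1 RuB by simp
    have QDu: "QD (vlist u) \<longleftrightarrow> 0 < emeasure lborel (D \<inter> ?Ru)"
      using QD(2)[rule_format, of "vlist u"] f2 DRB by simp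
    show ?thesis
    proof (cases "0 < emeasure lborel ?Ru")
      case True
      then have inf: "infinite ?Ru"
        using emeasure_lborel_countable[OF countable_finite] by fastforce
      then have eq: "equiv_on (\<eta> e u) lborel ?Ru" using reset e by blast
      have "0 < emeasure (\<eta> e u) (D \<inter> ?Ru) \<longleftrightarrow> 0 < emeasure lborel (D \<inter> ?Ru)"
        using eq DRB ef(2) unfolding equiv_on_def by auto
      then show ?thesis unfolding Q_def using True QRu QDu eqD by simp
    next
      case False
      then have fin: "finite ?Ru" using reset e by blast
      then have eq: "equiv_on (\<eta> e u) (count_space UNIV) ?Ru" using reset e by blast
      have "0 < emeasure (\<eta> e u) (D \<inter> ?Ru) \<longleftrightarrow> 0 < emeasure (count_space UNIV) (D \<inter> ?Ru)"
        using eq DRB ef(2) unfolding equiv_on_def by auto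
      also have "\<dots> \<longleftrightarrow> D \<inter> ?Ru \<noteq> {}"
        using fin by (simp add: emeasure_count_space_finite card_gt_0_iff)
      finally have A: "0 < emeasure (\<eta> e u) D \<longleftrightarrow> D \<inter> ?Ru \<noteq> {}" using eqD by simp
      have B: "(\<exists>ys. length ys = CARD('n::enum) \<and> ((vlist u @ ys) \<in> RR \<and> drop CARD('n::enum) (vlist u @ ys) \<in> vlist ` D))
           \<longleftrightarrow> D \<inter> ?Ru \<noteq> {}"
      proof
        assume "\<exists>ys. length ys = CARD('n::enum) \<and> ((vlist u @ ys) \<in> RR \<and> drop CARD('n::enum) (vlist u @ ys) \<in> vlist ` D)"
        then obtain ys where ys: "length ys = CARD('n::enum)" "(vlist u @ ys) \<in> RR" "drop CARD('n::enum) (vlist u @ ys) \<in> vlist ` D"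
          by blast
        obtain x :: "real ^ 'n::enum" where x: "vlist x = ys" using vlist_surj[OF ys(1)] by blast
        have "vlist u @ vlist x \<in> RR" "vlist x \<in> vlist ` D" using ys(2,3) x by auto
        then have "x \<in> ?Ru" "x \<in> D" by (simp_all only: rrm vmem)
        then show "D \<inter> ?Ru \<noteq> {}" by blast
      next
        assume "D \<inter> ?Ru \<noteq> {}"
        then obtain x where "x \<in> D" "x \<in> ?Ru" by blast
        then show "\<exists>ys. length ys = CARD('n::enum) \<and> ((vlist u @ ys) \<in> RR \<and> drop CARD('n::enum) (vlist u @ ys) \<in> vlist ` D)"
          using rrm by (intro exI[of _ "vlist x"]) auto
      qed
      show ?thesis unfolding Q_def using False QRu A B by simp
    qed
  qed
  then show ?thesis using dQ by blast
qed

end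


context shsc
begin

lemma Ipred:
  "\<exists>F. dset S (Suc CARD('n::enum)) F \<and> (\<forall>v t. F (vlist v @ [t]) \<longleftrightarrow> t \<in> I_state E Inv \<gamma> G (l0, v))"
proof -
  have dI: "dset S CARD('n::enum) (\<lambda>ys. ys \<in> vlist ` Inv l0)"
    using defd2 dset_set[OF rs] unfolding definable_def by blast
  obtain FI where FI: "dset S (Suc CARD('n::enum)) FI"
      "\<forall>v t. FI (vlist v @ [t]) \<longleftrightarrow> 0 \<le> t \<and> vlist (\<gamma> l0 v t) \<in> vlist ` Inv l0"
    using flowpred[OF dI, of l0] by blast
  have "\<forall>e\<in>E. \<exists>F. dset S (Suc CARD('n::enum)) F \<and> (\<forall>v t. F (vlist v @ [t]) \<longleftrightarrow> 0 \<le> t \<and> vlist (\<gamma> l0 v t) \<in> vlist ` G e)"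
  proof
    fix e assume "e \<in> E"
    then have "dset S CARD('n::enum) (\<lambda>ys. ys \<in> vlist ` G e)"
      using defd3 dset_set[OF rs] unfolding definable_def by blast
    then show "\<exists>F. dset S (Suc CARD('n::enum)) F \<and> (\<forall>v t. F (vlist v @ [t]) \<longleftrightarrow> 0 \<le> t \<and> vlist (\<gamma> l0 v t) \<in> vlist ` G e)"
      by (rule flowpred)
  qed
  then obtain FG where FG: "\<forall>e\<in>E. dset S (Suc CARD('n::enum)) (FG e) \<and>
      (\<forall>v t. FG e (vlist v @ [t]) \<longleftrightarrow> 0 \<le> t \<and> vlist (\<gamma> l0 v t) \<in> vlist ` G e)"
    by (metis (no_types))
  let ?N = "CARD('n::enum)"
  define IE where "IE e zs = (0 \<le> zs ! ?N \<and> (\<forall>x. 0 \<le> x \<and> x \<le> zs ! ?N \<longrightarrow> FI (take ?N zs @ [x])) \<and> FG e zs)" for e zs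
  have allpart: "dset S (Suc ?N) (\<lambda>zs. \<forall>x. 0 \<le> x \<and> x \<le> zs ! ?N \<longrightarrow> FI (take ?N zs @ [x]))"
  proof -
    have "dset S (Suc (Suc ?N)) (\<lambda>ws. 0 \<le> ws ! Suc ?N \<and> ws ! Suc ?N \<le> ws ! ?N \<longrightarrow> FI (map (\<lambda>i. ws ! i) ([0..<?N] @ [Suc ?N])))"
      by (intro dset_imp[OF rs] dset_conj[OF rs] dset_nonneg[OF rs] dset_le[OF rs] dset_subst[OF rs FI(1)]) auto
    then have "dset S (Suc ?N) (\<lambda>zs. \<forall>x. 0 \<le> (zs @ [x]) ! Suc ?N \<and> (zs @ [x]) ! Suc ?N \<le> (zs @ [x]) ! ?N \<longrightarrow>
        FI (map (\<lambda>i. (zs @ [x]) ! i) ([0..<?N] @ [Suc ?N])))"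
      by (rule dset_all1[OF rs])
    then show ?thesis
    proof (rule dset_congI)
      fix zs :: "real list" assume lz: "length zs = Suc ?N"
      have m: "map (\<lambda>i. (zs @ [x]) ! i) ([0..<?N] @ [Suc ?N]) = take ?N zs @ [x]" for x
      proof -
        have "map (\<lambda>i. (zs @ [x]) ! i) [0..<?N] = take ?N zs"
          using lz by (intro nth_equalityI) (auto simp: nth_append)
        then show ?thesis using lz by (simp add: nth_append)
      qed
      have a: "(zs @ [x]) ! Suc ?N = x" "(zs @ [x]) ! ?N = zs ! ?N" for x
        using lz by (auto simp: nth_append)
      show "(\<forall>x. 0 \<le> (zs @ [x]) ! Suc ?N \<and> (zs @ [x]) ! Suc ?N \<le> (zs @ [x]) ! ?N \<longrightarrow>
        FI (map (\<lambda>i. (zs @ [x]) ! i) ([0..<?N] @ [Suc ?N]))) =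
        (\<forall>x. 0 \<le> x \<and> x \<le> zs ! ?N \<longrightarrow> FI (take ?N zs @ [x]))"
        unfolding m a by blast
    qed
  qed
  have dIE: "dset S (Suc ?N) (IE e)" if "e \<in> E" for e
    unfolding IE_def using FG that
    by (intro dset_conj[OF rs] dset_nonneg[OF rs] allpart) auto
  have finE: "finite {e \<in> E. src e = l0}" using shs1 by simp
  have d: "dset S (Suc ?N) (\<lambda>zs. \<exists>e\<in>{e \<in> E. src e = l0}. IE e zs)"
    by (rule dset_finex[OF rs finE]) (simp add: dIE)
  have "(\<exists>e\<in>{e \<in> E. src e = l0}. IE e (vlist v @ [t])) \<longleftrightarrow> t \<in> I_state E Inv \<gamma> G (l0, v)" for v t
  proof -
    have n: "(vlist v @ [t]) ! ?N = t" by (simp add: nth_append)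
    have tk: "take ?N (vlist v @ [t]) = vlist v" by simp
    have "IE e (vlist v @ [t]) \<longleftrightarrow> t \<in> I_edge Inv \<gamma> G (l0, v) e" if "e \<in> E" for e
      unfolding IE_def n tk I_edge_def using FI(2) FG that by (auto simp: vmem)
    then show ?thesis unfolding I_state_def by auto
  qed
  then show ?thesis using d by blast
qed

lemma integrand_pos:
  "0 < kernel_integrand E \<gamma> w \<eta> (l0, v) l D t \<longleftrightarrow>
   (\<exists>e\<in>{e \<in> E. src e = l0 \<and> tgt e = l}. \<gamma> l0 v t \<in> G e \<and> 0 < emeasure (\<eta> e (\<gamma> l0 v t)) D)"
proof -
  have finF: "finite {e \<in> E. src e = l0 \<and> tgt e = l}" using shs1 by simp
  have wp: "0 < w (l0, \<gamma> l0 v t) e \<longleftrightarrow> e \<in> E \<and> src e = l0 \<and> \<gamma> l0 v t \<in> G e" for e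
    using shs4[rule_format, of "(l0, \<gamma> l0 v t)" e] unfolding enabled_def by auto
  have "0 < kernel_integrand E \<gamma> w \<eta> (l0, v) l D t \<longleftrightarrow>
    (\<exists>e\<in>{e \<in> E. src e = l0 \<and> tgt e = l}. ennreal (w (l0, \<gamma> l0 v t) e) * emeasure (\<eta> e (\<gamma> l0 v t)) D \<noteq> 0)"
    unfolding kernel_integrand_def using finF by (simp add: zero_less_iff_neq_zero sum_eq_0_iff)
  also have "\<dots> \<longleftrightarrow> (\<exists>e\<in>{e \<in> E. src e = l0 \<and> tgt e = l}. \<gamma> l0 v t \<in> G e \<and> 0 < emeasure (\<eta> e (\<gamma> l0 v t)) D)"
    using wp by (auto simp: zero_less_iff_neq_zero ennreal_eq_0_iff not_le)
  finally show ?thesis .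
qed

lemma Tpred:
  assumes DB: "D \<in> sets borel" and DD: "definable S D"
  shows "\<exists>F. dset S (Suc CARD('n::enum)) F \<and>
     (\<forall>v t. 0 \<le> t \<longrightarrow> (F (vlist v @ [t]) \<longleftrightarrow> 0 < kernel_integrand E \<gamma> w \<eta> (l0, v) l D t))"
proof -
  have "\<forall>e\<in>E. \<exists>F. dset S (Suc CARD('n::enum)) F \<and> (\<forall>v t. F (vlist v @ [t]) \<longleftrightarrow> 0 \<le> t \<and>
       (vlist (\<gamma> l0 v t) \<in> vlist ` G e \<and> 0 < emeasure (\<eta> e (\<gamma> l0 v t)) D))"
  proof
    fix e assume e: "e \<in> E"
    obtain Qe where Qe: "dset S CARD('n::enum) Qe" "\<forall>u. Qe (vlist u) \<longleftrightarrow> 0 < emeasure (\<eta> e u) D"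
      using pos_eta[OF e DB DD] by blast
    have "dset S CARD('n::enum) (\<lambda>ys. ys \<in> vlist ` G e)"
      using defd3 e dset_set[OF rs] unfolding definable_def by blast
    then have "dset S CARD('n::enum) (\<lambda>ys. ys \<in> vlist ` G e \<and> Qe ys)"
      by (intro dset_conj[OF rs] Qe(1))
    then obtain F where F: "dset S (Suc CARD('n::enum)) F"
        "\<forall>v t. F (vlist v @ [t]) \<longleftrightarrow> 0 \<le> t \<and> (vlist (\<gamma> l0 v t) \<in> vlist ` G e \<and> Qe (vlist (\<gamma> l0 v t)))"
      using flowpred by blast
    show "\<exists>F. dset S (Suc CARD('n::enum)) F \<and> (\<forall>v t. F (vlist v @ [t]) \<longleftrightarrow> 0 \<le> t \<and>
       (vlist (\<gamma> l0 v t) \<in> vlist ` G e \<and> 0 < emeasure (\<eta> e (\<gamma> l0 v t)) D))"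
      using F Qe(2) by auto
  qed
  then obtain FT where FT: "\<forall>e\<in>E. dset S (Suc CARD('n::enum)) (FT e) \<and> (\<forall>v t. FT e (vlist v @ [t]) \<longleftrightarrow> 0 \<le> t \<and>
       (vlist (\<gamma> l0 v t) \<in> vlist ` G e \<and> 0 < emeasure (\<eta> e (\<gamma> l0 v t)) D))"
    by (metis (no_types))
  have finF: "finite {e \<in> E. src e = l0 \<and> tgt e = l}" using shs1 by simp
  have d: "dset S (Suc CARD('n::enum)) (\<lambda>zs. \<exists>e\<in>{e \<in> E. src e = l0 \<and> tgt e = l}. FT e zs)"
    by (rule dset_finex[OF rs finF]) (use FT in simp)
  have "0 \<le> t \<longrightarrow> ((\<exists>e\<in>{e \<in> E. src e = l0 \<and> tgt e = l}. FT e (vlist v @ [t])) \<longleftrightarrow>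
      0 < kernel_integrand E \<gamma> w \<eta> (l0, v) l D t)" for v t
    unfolding integrand_pos using FT by (auto simp: vmem)
  then show ?thesis using d by blast
qed

end


context shsc
begin

lemma slice_iff:
  assumes DB: "D \<in> sets borel"
  shows "(l0, v) \<in> Pre E \<gamma> \<mu> w \<eta> l D \<longleftrightarrow>
   ((finite (I_state E Inv \<gamma> G (l0, v)) \<and> {t. 0 < kernel_integrand E \<gamma> w \<eta> (l0, v) l D t} \<inter> I_state E Inv \<gamma> G (l0, v) \<noteq> {})
    \<or> (infinite (I_state E Inv \<gamma> G (l0, v)) \<and>
       0 < emeasure lborel ({t. 0 < kernel_integrand E \<gamma> w \<eta> (l0, v) l D t} \<inter> I_state E Inv \<gamma> G (l0, v))))"
proof -
  let ?s = "(l0, v)"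
  let ?I = "I_state E Inv \<gamma> G ?s"
  let ?f = "kernel_integrand E \<gamma> w \<eta> ?s l D"
  let ?T = "{t. 0 < ?f t}"
  let ?M = "\<mu> ?s"
  have ps: "prob_space ?M" "sets ?M = sets borel" "emeasure ?M ?I = 1" using shs3 by blast+
  have sp: "space ?M = UNIV" using sets_eq_imp_space_eq[OF ps(2)] by simp
  have fm0: "?f \<in> borel_measurable borel" using shs7 DB by blast
  have fm: "?f \<in> borel_measurable ?M" using fm0 measurable_cong_sets[OF ps(2) refl] by blast
  have T: "?T = {x \<in> space ?M. ?f x \<noteq> 0}" using sp by (auto simp: zero_less_iff_neq_zero)
  have TM: "?T \<in> sets ?M" unfolding T using fm by measurable
  have IM: "?I \<in> sets ?M"
  proof (rule ccontr)
    assume "?I \<notin> sets ?M" then have "emeasure ?M ?I = 0" by (simp add: emeasure_notin_sets)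
    then show False using ps(3) by simp
  qed
  have "(?s \<in> Pre E \<gamma> \<mu> w \<eta> l D) \<longleftrightarrow> 0 < emeasure ?M ?T"
    unfolding Pre_def shs_kernel_def mem_Collect_eq T
    using nn_integral_0_iff[OF fm] by (simp add: zero_less_iff_neq_zero)
  also have "emeasure ?M ?T = emeasure ?M (?T \<inter> ?I)"
    by (rule prob_restrict[OF ps(1) IM ps(3) TM])
  finally have P: "(?s \<in> Pre E \<gamma> \<mu> w \<eta> l D) \<longleftrightarrow> 0 < emeasure ?M (?T \<inter> ?I)" .
  have TIM: "?T \<inter> ?I \<in> sets ?M" using TM IM by auto
  show ?thesis
  proof (cases "finite ?I")
    case True
    then have eq: "equiv_on ?M (uniform_count_measure ?I) ?I" using delay by blast
    have "0 < emeasure ?M (?T \<inter> ?I) \<longleftrightarrow> 0 < emeasure (uniform_count_measure ?I) (?T \<inter> ?I)"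
      using eq TIM unfolding equiv_on_def by (auto simp: sets_uniform_count_measure)
    also have "\<dots> \<longleftrightarrow> ?T \<inter> ?I \<noteq> {}"
    proof -
      have ne: "?I \<noteq> {}" using shs2 by blast
      have e: "emeasure (uniform_count_measure ?I) (?T \<inter> ?I) = ennreal (real (card (?T \<inter> ?I)) / real (card ?I))"
        using True by (intro emeasure_uniform_count_measure) auto
      have f: "finite (?T \<inter> ?I)" using True by auto
      have c: "0 < real (card ?I)" using True ne by (simp add: card_gt_0_iff)
      have "0 < ennreal (real (card (?T \<inter> ?I)) / real (card ?I)) \<longleftrightarrow> 0 < real (card (?T \<inter> ?I)) / real (card ?I)"
        by simp
      also have "\<dots> \<longleftrightarrow> 0 < real (card (?T \<inter> ?I))" using c by (simp add: zero_less_divide_iff)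
      also have "\<dots> \<longleftrightarrow> ?T \<inter> ?I \<noteq> {}" using f by (simp add: card_gt_0_iff)
      finally show ?thesis unfolding e .
    qed
    finally show ?thesis using P True by simp
  next
    case False
    then have eq: "equiv_on ?M lborel ?I" using delay by blast
    have "0 < emeasure ?M (?T \<inter> ?I) \<longleftrightarrow> 0 < emeasure lborel (?T \<inter> ?I)"
      using eq TIM ps(2) unfolding equiv_on_def by auto
    then show ?thesis using P False by simp
  qed
qed

lemma main_ctx:
  assumes DD: "definable S D"
  shows "definable S {v. (l0, v) \<in> Pre E \<gamma> \<mu> w \<eta> l D}"
proof (cases "D \<in> sets borel")
  case False
  have "{v. (l0, v) \<in> Pre E \<gamma> \<mu> w \<eta> l D} = {}"
  proof -
    have "kernel_integrand E \<gamma> w \<eta> s l D = (\<lambda>_. 0)" for s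
    proof (rule ext)
      fix t
      have "emeasure (\<eta> e u) D = 0" if "e \<in> E" for e u
        using eta_facts(2)[OF that, of u] False by (simp add: emeasure_notin_sets)
      then show "kernel_integrand E \<gamma> w \<eta> s l D t = 0" unfolding kernel_integrand_def by (intro sum.neutral) auto
    qed
    then show ?thesis unfolding Pre_def shs_kernel_def by simp
  qed
  then show ?thesis unfolding definable_def using rs_empty[OF rs] by simp
next
  case True
  let ?N = "CARD('n::enum)"
  obtain FI where FI: "dset S (Suc ?N) FI" "\<forall>v t. FI (vlist v @ [t]) \<longleftrightarrow> t \<in> I_state E Inv \<gamma> G (l0, v)"
    using Ipred[of l0] by blast
  obtain FT where FT: "dset S (Suc ?N) FT"
    "\<forall>v t. 0 \<le> t \<longrightarrow> (FT (vlist v @ [t]) \<longleftrightarrow> 0 < kernel_integrand E \<gamma> w \<eta> (l0, v) l D t)"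
    using Tpred[OF True DD, of l0 l] by blast
  define W where "W zs = (FT zs \<and> FI zs)" for zs
  have dW: "dset S (Suc ?N) W" unfolding W_def by (intro dset_conj[OF rs] FI(1) FT(1))
  define FP where "FP xs = ((\<not> (\<exists>a b. a < b \<and> (\<forall>x. a < x \<and> x < b \<longrightarrow> FI (xs @ [x]))) \<and> (\<exists>x. W (xs @ [x])))
     \<or> ((\<exists>a b. a < b \<and> (\<forall>x. a < x \<and> x < b \<longrightarrow> FI (xs @ [x]))) \<and>
        (\<exists>a b. a < b \<and> (\<forall>x. a < x \<and> x < b \<longrightarrow> W (xs @ [x])))))" for xs
  have dFP: "dset S ?N FP"
    unfolding FP_def
    by (intro dset_disj[OF rs] dset_conj[OF rs] dset_not[OF rs] dset_interval[OF rs] dset_ex1[OF rs] FI(1) dW)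
  have "v \<in> {v. (l0, v) \<in> Pre E \<gamma> \<mu> w \<eta> l D} \<longleftrightarrow> FP (vlist v)" for v
  proof -
    let ?I = "I_state E Inv \<gamma> G (l0, v)"
    let ?T = "{t. 0 < kernel_integrand E \<gamma> w \<eta> (l0, v) l D t}"
    have Ieq: "{x. FI (vlist v @ [x])} = ?I" using FI(2) by auto
    have Inn: "t \<in> ?I \<Longrightarrow> 0 \<le> t" for t unfolding I_state_def I_edge_def by auto
    have TIeq: "{x. W (vlist v @ [x])} = ?T \<inter> ?I"
      unfolding W_def using FI(2) FT(2) Inn by auto
    have lv: "length (vlist v) = ?N" by simp
    have a1: "(\<exists>a b. a < b \<and> (\<forall>x. a < x \<and> x < b \<longrightarrow> FI (vlist v @ [x]))) \<longleftrightarrow> infinite ?I"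
      using omin_fibre_iff(1)[OF omin FI(1) lv] Ieq by simp
    have a2: "(\<exists>a b. a < b \<and> (\<forall>x. a < x \<and> x < b \<longrightarrow> W (vlist v @ [x]))) \<longleftrightarrow> 0 < emeasure lborel (?T \<inter> ?I)"
      using omin_fibre_iff(2)[OF omin dW lv] TIeq by simp
    have a3: "(\<exists>x. W (vlist v @ [x])) \<longleftrightarrow> ?T \<inter> ?I \<noteq> {}" using TIeq by auto
    show ?thesis unfolding FP_def a1 a2 a3 mem_Collect_eq slice_iff[OF True] by blast
  qed
  then show ?thesis using definable_iff dFP by blast
qed

end

lemma main_all:
  fixes S :: "nat \<Rightarrow> real list set set"
    and E :: "('l::finite \<times> 'a \<times> 'l) set"
    and Inv :: "'l \<Rightarrow> (real ^ 'n::enum) set"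
    and \<gamma> :: "'l \<Rightarrow> real ^ 'n::enum \<Rightarrow> real \<Rightarrow> real ^ 'n::enum"
    and G :: "('l \<times> 'a \<times> 'l) \<Rightarrow> (real ^ 'n::enum) set"
    and R :: "('l \<times> 'a \<times> 'l) \<Rightarrow> real ^ 'n::enum \<Rightarrow> (real ^ 'n::enum) set"
    and \<mu> :: "'l \<times> (real ^ 'n::enum) \<Rightarrow> real measure"
    and w :: "'l \<times> (real ^ 'n::enum) \<Rightarrow> ('l \<times> 'a \<times> 'l) \<Rightarrow> real"
    and \<eta> :: "('l \<times> 'a \<times> 'l) \<Rightarrow> real ^ 'n::enum \<Rightarrow> (real ^ 'n::enum) measure"
  assumes "shsc S E Inv \<gamma> G R \<mu> w \<eta>"
  shows "\<forall>l D. definable S D \<longrightarrow> definable_states S (Pre E \<gamma> \<mu> w \<eta> l D)"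
proof -
  interpret shsc S E Inv \<gamma> G R \<mu> w \<eta> by fact
  show ?thesis unfolding definable_states_def using main_ctx by blast
qed


theorem mainTheorem12:
  fixes S :: "nat \<Rightarrow> real list set set"
    and E :: "('l::finite \<times> 'a \<times> 'l) set"
    and Inv :: "'l \<Rightarrow> (real ^ 'n::enum) set"
    and \<gamma> :: "'l \<Rightarrow> real ^ 'n::enum \<Rightarrow> real \<Rightarrow> real ^ 'n::enum"
    and G :: "('l \<times> 'a \<times> 'l) \<Rightarrow> (real ^ 'n::enum) set"
    and R :: "('l \<times> 'a \<times> 'l) \<Rightarrow> real ^ 'n::enum \<Rightarrow> (real ^ 'n::enum) set"
    and \<mu> :: "'l \<times> (real ^ 'n::enum) \<Rightarrow> real measure"
    and w :: "'l \<times> (real ^ 'n::enum) \<Rightarrow> ('l \<times> 'a \<times> 'l) \<Rightarrow> real"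
    and \<eta> :: "('l \<times> 'a \<times> 'l) \<Rightarrow> real ^ 'n::enum \<Rightarrow> (real ^ 'n::enum) measure"
  assumes omin: "o_minimal S"
    and shs: "is_shs E Inv \<gamma> G R \<mu> w \<eta>"
    and defd: "shs_defined_in S E Inv \<gamma> G R"
    and delay: "\<forall>s. (finite (I_state E Inv \<gamma> G s) \<longrightarrow>
                       equiv_on (\<mu> s) (uniform_count_measure (I_state E Inv \<gamma> G s)) (I_state E Inv \<gamma> G s))
                   \<and> (infinite (I_state E Inv \<gamma> G s) \<longrightarrow>
                       equiv_on (\<mu> s) lborel (I_state E Inv \<gamma> G s))"
    and reset: "\<forall>e\<in>E. \<forall>v. (finite (R e v) \<longrightarrow> equiv_on (\<eta> e v) (count_space UNIV) (R e v))
                   \<and> (infinite (R e v) \<longrightarrow> 0 < emeasure lborel (R e v) \<and> equiv_on (\<eta> e v) lborel (R e v))"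
  shows "\<forall>l D. definable S D \<longrightarrow> definable_states S (Pre E \<gamma> \<mu> w \<eta> l D)"
proof -
  have "shsc S E Inv \<gamma> G R \<mu> w \<eta>"
    unfolding shsc_def by (intro conjI omin shs defd delay reset)
  then show ?thesis by (rule main_all)
qed

end
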